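(* Let $\phi^k,\phi^{k-1}\in\mathcal{G}_N$ with $\overline{\phi^k}=\overline{\phi^{k-1}}$. Then each of the following two equations has a unique solution $\phi^{k+1}\in\mathcal{G}_N$ (the two solutions being in general different): \[ \frac{\frac32\phi^{k+1}-2\phi^k+\frac12\phi^{k-1}}{\Delta t}=\Delta_N\mu_i^{k+1},\quad i=1,2, \] where \[ \mu_1^{k+1}=-\nabla_N\cdot(|\nabla_N\phi^{k+1}|^2\nabla_N\phi^{k+1})+a\phi^{k+1}+2\Delta_N(2\phi^k-\phi^{k-1})-A\Delta t\,\Delta_N(\phi^{k+1}-\phi^k)+\Delta_N^2\phi^{k+1}, \] \[ \mu_2^{k+1}=-\nabla_N\cdot(|\nabla_N\phi^{k+1}|^2\nabla_N\phi^{k+1})-\varepsilon(2\phi^k-\phi^{k-1})-A\Delta t\,\Delta_N(\phi^{k+1}-\phi^k)+(1+\Delta_N)^2\phi^{k+1}. \] Moreover the schemes are mass conservative: if a sequence $(\phi^k)_{k\ge -1}$ is generated by either scheme from data with $\overline{\phi^0}=\overline{\phi^{-1}}=:\beta_0$, then $\overline{\phi^k}=\beta_0$ for all $k\ge0$.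
   Context: Let $K\in\mathbb{N}$, $N=2K+1$, $h=1/N$, $\Omega=(0,1)^3$, grid points $(ih,jh,kh)$. $\mathcal{G}_N$ is the space of real grid functions on $\mathbb{Z}^3$ that are $N$-periodic in each index; $\langle f,g\rangle=h^3\sum_{i,j,k=0}^{N-1}f_{i,j,k}g_{i,j,k}$ and $\overline f=\langle f,1\rangle$. Each $f\in\mathcal{G}_N$ has discrete Fourier expansion $f_{i,j,k}=\sum_{\ell,m,n=-K}^K\hat f_{\ell,m,n}\exp(2\pi\mathrm{i}(\ell x_i+my_j+nz_k))$; $\mathcal{D}_x$ multiplies coefficients by $2\pi\mathrm{i}\ell$ (similarly $\mathcal{D}_y,\mathcal{D}_z$ with $m,n$), $\nabla_Nf=(\mathcal{D}_xf,\mathcal{D}_yf,\mathcal{D}_zf)$, $\nabla_N\cdot(f_1,f_2,f_3)=\mathcal{D}_xf_1+\mathcal{D}_yf_2+\mathcal{D}_zf_3$, $\Delta_N$ multiplies coefficients by $-4\pi^2(\ell^2+m^2+n^2)$; products such as $|\nabla_N\phi|^2\nabla_N\phi$ are taken pointwise. Parameters: $\Delta t>0$ is the time step, $0<\varepsilon<1$, $a:=1-\varepsilon>0$, and $A\ge0$ is a constant (artificial diffusion coefficient). *)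

theory Defs
  imports "HOL-Analysis.Analysis"
begin

type_synonym grid = "int \<Rightarrow> int \<Rightarrow> int \<Rightarrow> real"

definition Ngrid :: "nat \<Rightarrow> nat" where
  "Ngrid K = 2 * K + 1"

definition grid_space :: "nat \<Rightarrow> grid set" where
  "grid_space K = {f. \<forall>i j k.
      f (i + int (Ngrid K)) j k = f i j k \<and>
      f i (j + int (Ngrid K)) k = f i j k \<and>
      f i j (k + int (Ngrid K)) = f i j k}"

definition ginner :: "nat \<Rightarrow> grid \<Rightarrow> grid \<Rightarrow> real" where
  "ginner K f g = (1 / real (Ngrid K)) ^ 3 *
     (\<Sum>i\<in>{0..<int (Ngrid K)}. \<Sum>j\<in>{0..<int (Ngrid K)}. \<Sum>k\<in>{0..<int (Ngrid K)}.
        f i j k * g i j k)"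

definition gmean :: "nat \<Rightarrow> grid \<Rightarrow> real" where
  "gmean K f = ginner K f (\<lambda>_ _ _. 1)"

text \<open>Discrete Fourier coefficients: f_{ijk} = sum_{l,m,n=-K}^K fhat_{lmn} exp(2 pi i (l x_i + m y_j + n z_k)),
  with x_i = i h = i/N.\<close>
definition dft :: "nat \<Rightarrow> grid \<Rightarrow> int \<Rightarrow> int \<Rightarrow> int \<Rightarrow> complex" where
  "dft K f l m n = (1 / of_nat (Ngrid K)) ^ 3 *
     (\<Sum>i\<in>{0..<int (Ngrid K)}. \<Sum>j\<in>{0..<int (Ngrid K)}. \<Sum>k\<in>{0..<int (Ngrid K)}.
        complex_of_real (f i j k) *
        cis (- 2 * pi * real_of_int (l * i + m * j + n * k) / real (Ngrid K)))"

text \<open>Fourier multiplier operator: multiply the coefficients by sigma(l,m,n) and resynthesize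
  (real part; the result is real for the multipliers used below).\<close>
definition spec_op :: "nat \<Rightarrow> (int \<Rightarrow> int \<Rightarrow> int \<Rightarrow> complex) \<Rightarrow> grid \<Rightarrow> grid" where
  "spec_op K \<sigma> f = (\<lambda>i j k. Re
     (\<Sum>l\<in>{- int K..int K}. \<Sum>m\<in>{- int K..int K}. \<Sum>n\<in>{- int K..int K}.
        \<sigma> l m n * dft K f l m n *
        cis (2 * pi * real_of_int (l * i + m * j + n * k) / real (Ngrid K))))"

definition Dx :: "nat \<Rightarrow> grid \<Rightarrow> grid" where
  "Dx K = spec_op K (\<lambda>l m n. \<i> * complex_of_real (2 * pi * real_of_int l))"
definition Dy :: "nat \<Rightarrow> grid \<Rightarrow> grid" where
  "Dy K = spec_op K (\<lambda>l m n. \<i> * complex_of_real (2 * pi * real_of_int m))"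
definition Dz :: "nat \<Rightarrow> grid \<Rightarrow> grid" where
  "Dz K = spec_op K (\<lambda>l m n. \<i> * complex_of_real (2 * pi * real_of_int n))"

definition Lap :: "nat \<Rightarrow> grid \<Rightarrow> grid" where
  "Lap K = spec_op K (\<lambda>l m n.
     complex_of_real (- 4 * pi ^ 2 * real_of_int (l ^ 2 + m ^ 2 + n ^ 2)))"

definition ndiv :: "nat \<Rightarrow> grid \<Rightarrow> grid \<Rightarrow> grid \<Rightarrow> grid" where
  "ndiv K f1 f2 f3 = (\<lambda>i j k. Dx K f1 i j k + Dy K f2 i j k + Dz K f3 i j k)"

definition plap_term :: "nat \<Rightarrow> grid \<Rightarrow> grid" where
  "plap_term K \<phi> =
     (let gx = Dx K \<phi>; gy = Dy K \<phi>; gz = Dz K \<phi>;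
          s = (\<lambda>i j k. (gx i j k)\<^sup>2 + (gy i j k)\<^sup>2 + (gz i j k)\<^sup>2)
      in ndiv K (\<lambda>i j k. s i j k * gx i j k) (\<lambda>i j k. s i j k * gy i j k)
                (\<lambda>i j k. s i j k * gz i j k))"

text \<open>Chemical potential mu_1^{k+1} (a = 1 - eps).\<close>
definition mu1 :: "nat \<Rightarrow> real \<Rightarrow> real \<Rightarrow> real \<Rightarrow> grid \<Rightarrow> grid \<Rightarrow> grid \<Rightarrow> grid" where
  "mu1 K dt eps A \<phi> \<phi>k \<phi>km1 = (\<lambda>i j k.
      - plap_term K \<phi> i j k
      + (1 - eps) * \<phi> i j k
      + 2 * Lap K (\<lambda>i j k. 2 * \<phi>k i j k - \<phi>km1 i j k) i j k
      - A * dt * Lap K (\<lambda>i j k. \<phi> i j k - \<phi>k i j k) i j k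
      + Lap K (Lap K \<phi>) i j k)"

text \<open>Chemical potential mu_2^{k+1}; (1 + Delta_N)^2 phi = phi + 2 Delta_N phi + Delta_N(Delta_N phi).\<close>
definition mu2 :: "nat \<Rightarrow> real \<Rightarrow> real \<Rightarrow> real \<Rightarrow> grid \<Rightarrow> grid \<Rightarrow> grid \<Rightarrow> grid" where
  "mu2 K dt eps A \<phi> \<phi>k \<phi>km1 = (\<lambda>i j k.
      - plap_term K \<phi> i j k
      - eps * (2 * \<phi>k i j k - \<phi>km1 i j k)
      - A * dt * Lap K (\<lambda>i j k. \<phi> i j k - \<phi>k i j k) i j k
      + (\<phi> i j k + 2 * Lap K \<phi> i j k + Lap K (Lap K \<phi>) i j k))"

definition mu_scheme :: "nat \<Rightarrow> nat \<Rightarrow> real \<Rightarrow> real \<Rightarrow> real \<Rightarrow> grid \<Rightarrow> grid \<Rightarrow> grid \<Rightarrow> grid" where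
  "mu_scheme s K = (if s = 1 then mu1 K else mu2 K)"

definition scheme :: "nat \<Rightarrow> nat \<Rightarrow> real \<Rightarrow> real \<Rightarrow> real \<Rightarrow> grid \<Rightarrow> grid \<Rightarrow> grid \<Rightarrow> bool" where
  "scheme s K dt eps A \<phi> \<phi>k \<phi>km1 \<longleftrightarrow>
     (\<lambda>i j k. (3 / 2 * \<phi> i j k - 2 * \<phi>k i j k + 1 / 2 * \<phi>km1 i j k) / dt)
       = Lap K (mu_scheme s K dt eps A \<phi> \<phi>k \<phi>km1)"

end

theory Submission
  imports Defs "HOL-Analysis.Analysis"
begin

lemma Ngrid_pos: "Ngrid K > 0" by (simp add: Ngrid_def)

lemma cis_int_2pi: "cis (2 * pi * real_of_int d) = 1"
  by (rule cis_multiple_2pi) simp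

lemma geom_gen:
  fixes d :: int and N :: nat
  assumes N0: "N > 0"
  shows "(\<Sum>t<N. cis (2*pi*real_of_int (int t * d)/real N))
       = (if int N dvd d then of_nat N else 0)"
proof -
  define z where "z = cis (2*pi*real_of_int d/real N)"
  have zt: "cis (2*pi*real_of_int (int t * d)/real N) = z ^ t" for t
  proof -
    have "z ^ t = cis (real t * (2*pi*real_of_int d/real N))" by (simp add: z_def Complex.DeMoivre)
    then show ?thesis by (simp add: field_simps)
  qed
  have S: "(\<Sum>t<N. cis (2*pi*real_of_int (int t * d)/real N)) = (\<Sum>t<N. z ^ t)"
    by (simp only: zt)
  show ?thesis
  proof (cases "int N dvd d")
    case True
    then obtain e where e: "d = int N * e" by blast
    have "2*pi*real_of_int d/real N = 2*pi*real_of_int e" unfolding e using N0 by simp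
    then have "z = 1" unfolding z_def by (simp add: cis_int_2pi)
    then show ?thesis using True S by simp
  next
    case False
    have zN: "z ^ N = 1"
    proof -
      have "z ^ N = cis (real N * (2*pi*real_of_int d/real N))" by (simp add: z_def Complex.DeMoivre)
      also have "real N * (2*pi*real_of_int d/real N) = 2*pi*real_of_int d" using N0 by simp
      finally show ?thesis by (simp add: cis_int_2pi)
    qed
    have "z \<noteq> 1"
    proof
      assume "z = 1"
      then have "cos (2*pi*real_of_int d/real N) = 1" unfolding z_def
        by (metis cis.sel(1) one_complex.sel(1))
      then obtain n :: int where n: "2*pi*real_of_int d/real N = real_of_int n * 2 * pi"
        using cos_one_2pi_int by blast
      then have "real_of_int d = real_of_int n * real N" using N0 by (simp add: field_simps)
      then have "d = n * int N" by (metis of_int_eq_iff of_int_mult of_int_of_nat_eq)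
      then show False using False by simp
    qed
    then show ?thesis using False zN S by (simp add: sum_gp_strict)
  qed
qed

lemma geom_nat:
  fixes d :: int
  shows "(\<Sum>t<Ngrid K. cis (2*pi*real_of_int (int t * d)/real (Ngrid K)))
       = (if int (Ngrid K) dvd d then of_nat (Ngrid K) else 0)"
  using geom_gen[OF Ngrid_pos] .

lemma geom_int:
  fixes d a :: int
  shows "(\<Sum>x\<in>{a..<a+int (Ngrid K)}. cis (2*pi*real_of_int (x * d)/real (Ngrid K)))
       = (if int (Ngrid K) dvd d then of_nat (Ngrid K) else 0)"
proof -
  define N where "N = Ngrid K"
  have "(\<Sum>x\<in>{a..<a+int N}. cis (2*pi*real_of_int (x * d)/real N))
      = (\<Sum>t<N. cis (2*pi*real_of_int ((a + int t) * d)/real N))"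
  proof (rule sum.reindex_bij_witness[of _ "\<lambda>t. a + int t" "\<lambda>x. nat (x - a)"])
  qed auto
  also have "\<dots> = (\<Sum>t<N. cis (2*pi*real_of_int (a*d)/real N) * cis (2*pi*real_of_int (int t * d)/real N))"
    by (rule sum.cong) (simp_all add: cis_mult algebra_simps add_divide_distrib)
  also have "\<dots> = cis (2*pi*real_of_int (a*d)/real N) * (if int N dvd d then of_nat N else 0)"
    unfolding sum_distrib_left[symmetric] N_def geom_nat by simp
  also have "\<dots> = (if int N dvd d then of_nat N else 0)"
  proof (cases "int N dvd d")
    case True
    then obtain e where e: "d = int N * e" by blast
    have "2*pi*real_of_int (a*d)/real N = 2*pi*real_of_int (a*e)"
      unfolding e using Ngrid_pos[of K] by (simp add: N_def)
    then show ?thesis using True by (simp add: cis_int_2pi)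
  qed simp
  finally show ?thesis unfolding N_def .
qed

type_synonym idx = "int \<times> int \<times> int"

definition B3 :: "nat \<Rightarrow> idx set" where
  "B3 K = {0..<int (Ngrid K)} \<times> {0..<int (Ngrid K)} \<times> {0..<int (Ngrid K)}"
definition M3 :: "nat \<Rightarrow> idx set" where
  "M3 K = {- int K..int K} \<times> {- int K..int K} \<times> {- int K..int K}"
definition dot :: "idx \<Rightarrow> idx \<Rightarrow> int" where
  "dot q p = fst q * fst p + fst (snd q) * fst (snd p) + snd (snd q) * snd (snd p)"
definition ep :: "nat \<Rightarrow> idx \<Rightarrow> idx \<Rightarrow> complex" where
  "ep K q p = cis (2 * pi * real_of_int (dot q p) / real (Ngrid K))"
definition ev3 :: "(int \<Rightarrow> int \<Rightarrow> int \<Rightarrow> 'b) \<Rightarrow> idx \<Rightarrow> 'b" where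
  "ev3 f p = f (fst p) (fst (snd p)) (snd (snd p))"
definition fh :: "nat \<Rightarrow> grid \<Rightarrow> idx \<Rightarrow> complex" where
  "fh K f q = dft K f (fst q) (fst (snd q)) (snd (snd q))"
definition cN :: "nat \<Rightarrow> real" where "cN K = (1 / real (Ngrid K)) ^ 3"

lemma finite_B3[simp]: "finite (B3 K)" by (simp add: B3_def)
lemma finite_M3[simp]: "finite (M3 K)" by (simp add: M3_def)
lemma cN_pos: "cN K > 0" using Ngrid_pos[of K] by (simp add: cN_def)

lemma sum3: "(\<Sum>i\<in>A. \<Sum>j\<in>B. \<Sum>k\<in>C. f i j k) = (\<Sum>p\<in>A\<times>B\<times>C. ev3 f p)"
  by (simp add: sum.cartesian_product ev3_def case_prod_unfold)

lemma dft_alt: "fh K f q = complex_of_real (cN K) *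
   (\<Sum>p\<in>B3 K. complex_of_real (ev3 f p) * cnj (ep K q p))"
proof -
  have *: "cis (- 2 * pi * real_of_int (fst q * i + fst (snd q) * j + snd (snd q) * k) / real (Ngrid K))
     = cnj (ep K q (i,j,k))" for i j k
    by (simp add: ep_def dot_def cis_cnj)
  show ?thesis unfolding fh_def dft_def B3_def sum3 * by (simp add: ev3_def cN_def)
qed

lemma spec_op_alt: "ev3 (spec_op K \<sigma> f) p = Re (\<Sum>q\<in>M3 K. ev3 \<sigma> q * fh K f q * ep K q p)"
proof -
  have "ev3 (spec_op K \<sigma> f) p = Re (\<Sum>l\<in>{- int K..int K}. \<Sum>m\<in>{- int K..int K}. \<Sum>n\<in>{- int K..int K}.
        \<sigma> l m n * dft K f l m n *
        cis (2 * pi * real_of_int (l * fst p + m * fst (snd p) + n * snd (snd p)) / real (Ngrid K)))"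
    unfolding ev3_def spec_op_def ..
  also have "\<dots> = Re (\<Sum>q\<in>M3 K. ev3 \<sigma> q * fh K f q * ep K q p)"
    unfolding sum3 M3_def
    by (rule arg_cong[where f=Re], rule sum.cong) (auto simp: ev3_def fh_def ep_def dot_def)
  finally show ?thesis .
qed

lemma Re_ofr_mult: "Re (complex_of_real r * z) = r * Re z" by simp

lemma ginner_alt: "ginner K f g = cN K * (\<Sum>p\<in>B3 K. ev3 f p * ev3 g p)"
  unfolding ginner_def B3_def sum3 cN_def by (simp add: ev3_def)

lemma cnj_dft: "cnj (fh K g q) = complex_of_real (cN K) *
   (\<Sum>p\<in>B3 K. complex_of_real (ev3 g p) * ep K q p)"
  unfolding dft_alt by simp

lemma adjoint: "ginner K (spec_op K \<sigma> f) g =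
   Re (\<Sum>q\<in>M3 K. ev3 \<sigma> q * fh K f q * cnj (fh K g q))"
proof -
  define a where "a = (\<lambda>q. ev3 \<sigma> q * fh K f q)"
  have "ginner K (spec_op K \<sigma> f) g = cN K * (\<Sum>p\<in>B3 K. Re (\<Sum>q\<in>M3 K. a q * ep K q p) * ev3 g p)"
    unfolding ginner_alt spec_op_alt a_def ..
  also have "\<dots> = cN K * (\<Sum>p\<in>B3 K. Re (\<Sum>q\<in>M3 K. a q * (complex_of_real (ev3 g p) * ep K q p)))"
  proof -
    have "(\<Sum>q\<in>M3 K. a q * (complex_of_real (ev3 g p) * ep K q p)) = complex_of_real (ev3 g p) * (\<Sum>q\<in>M3 K. a q * ep K q p)" for p
      by (simp add: sum_distrib_left mult.left_commute)
    then show ?thesis by (simp only: Re_ofr_mult mult.commute)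
  qed
  also have "\<dots> = Re (complex_of_real (cN K) * (\<Sum>p\<in>B3 K. \<Sum>q\<in>M3 K. a q * (complex_of_real (ev3 g p) * ep K q p)))"
    by (simp only: Re_ofr_mult Re_sum)
  also have "(\<Sum>p\<in>B3 K. \<Sum>q\<in>M3 K. a q * (complex_of_real (ev3 g p) * ep K q p))
     = (\<Sum>q\<in>M3 K. a q * (\<Sum>p\<in>B3 K. complex_of_real (ev3 g p) * ep K q p))"
    by (subst sum.swap) (simp add: sum_distrib_left)
  also have "complex_of_real (cN K) * \<dots> = (\<Sum>q\<in>M3 K. a q * cnj (fh K g q))"
    unfolding cnj_dft by (simp add: sum_distrib_left mult.left_commute)
  finally show ?thesis unfolding a_def .
qed

lemma ep_neg: "ep K (-q) p = cnj (ep K q p)"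
proof -
  have "real_of_int (dot (-q) p) = - real_of_int (dot q p)" by (simp add: dot_def)
  then have "2 * pi * real_of_int (dot (-q) p) / real (Ngrid K)
      = - (2 * pi * real_of_int (dot q p) / real (Ngrid K))" by simp
  then show ?thesis unfolding ep_def cis_cnj by simp
qed

lemma dft_neg: "fh K f (-q) = cnj (fh K f q)"
  unfolding cnj_dft by (subst dft_alt) (simp add: ep_neg)

lemma ev3_tuple[simp]: "ev3 f (i,j,k) = f i j k" by (simp add: ev3_def)

lemma spec_op_ev: "spec_op K \<sigma> f i j k = Re (\<Sum>q\<in>M3 K. ev3 \<sigma> q * fh K f q * ep K q (i,j,k))"
  using spec_op_alt[of K \<sigma> f "(i,j,k)"] by simp

lemma ep_shift:
  assumes "dot q p' = dot q p + int (Ngrid K) * t"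
  shows "ep K q p' = ep K q p"
proof -
  have "2 * pi * real_of_int (dot q p') / real (Ngrid K) = 2 * pi * real_of_int (dot q p) / real (Ngrid K) + 2 * pi * real_of_int t"
    using assms Ngrid_pos[of K] by (simp add: field_simps)
  then show ?thesis unfolding ep_def by (simp add: cis_mult[symmetric] cis_int_2pi)
qed

lemma spec_op_periodic: "spec_op K \<sigma> f \<in> grid_space K"
proof -
  have "ep K q (i + int (Ngrid K), j, k) = ep K q (i,j,k)"
       "ep K q (i, j + int (Ngrid K), k) = ep K q (i,j,k)"
       "ep K q (i, j, k + int (Ngrid K)) = ep K q (i,j,k)" for q i j k
    by (rule ep_shift[where t="fst q"], simp add: dot_def algebra_simps,
        rule ep_shift[where t="fst (snd q)"], simp add: dot_def algebra_simps,
        rule ep_shift[where t="snd (snd q)"], simp add: dot_def algebra_simps)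
  then show ?thesis unfolding grid_space_def by (simp add: spec_op_ev)
qed

lemma ep_mult_cnj: "ep K q p * cnj (ep K q' p) = ep K (q - q') p"
proof -
  have h: "real_of_int (dot (q - q') p) = real_of_int (dot q p) - real_of_int (dot q' p)"
    by (simp add: dot_def algebra_simps)
  have "2 * pi * real_of_int (dot q p) / real (Ngrid K) + - (2 * pi * real_of_int (dot q' p) / real (Ngrid K))
      = 2 * pi * real_of_int (dot (q - q') p) / real (Ngrid K)"
    by (simp only: h) (simp add: right_diff_distrib diff_divide_distrib)
  then show ?thesis unfolding ep_def cis_cnj cis_mult by simp
qed

definition chr :: "nat \<Rightarrow> int \<Rightarrow> int \<Rightarrow> complex" where
  "chr K d x = cis (2*pi*real_of_int (x * d)/real (Ngrid K))"

lemma ep_split: "ep K d p = chr K (fst d) (fst p) * chr K (fst (snd d)) (fst (snd p))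
   * chr K (snd (snd d)) (snd (snd p))"
  unfolding ep_def chr_def cis_mult dot_def using Ngrid_pos[of K] by (simp add: field_simps)

lemma sum_prod3: fixes a b c :: "int \<Rightarrow> complex" shows "(\<Sum>p\<in>A\<times>B\<times>C. a (fst p) * b (fst (snd p)) * (c (snd (snd p)) :: complex))
   = (\<Sum>x\<in>A. a x) * (\<Sum>y\<in>B. b y) * (\<Sum>z\<in>C. c z)"
proof -
  have "(\<Sum>x\<in>A. a x) * (\<Sum>y\<in>B. b y) * (\<Sum>z\<in>C. c z) = (\<Sum>x\<in>A. a x) * ((\<Sum>y\<in>B. b y) * (\<Sum>z\<in>C. c z))"
    by (rule mult.assoc)
  also have "\<dots> = (\<Sum>x\<in>A. a x) * (\<Sum>y\<in>B. \<Sum>z\<in>C. b y * c z)"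
    by (simp only: sum_product)
  also have "\<dots> = (\<Sum>x\<in>A. \<Sum>y\<in>B. \<Sum>z\<in>C. a x * (b y * c z))"
    by (simp only: sum_distrib_right) (simp only: sum_distrib_left)
  also have "\<dots> = (\<Sum>p\<in>A\<times>B\<times>C. ev3 (\<lambda>x y z. a x * (b y * c z)) p)" by (rule sum3)
  finally show ?thesis by (simp add: ev3_def mult.assoc)
qed

lemma dvd_small: fixes d :: int
  assumes "\<bar>d\<bar> < int (Ngrid K)" shows "int (Ngrid K) dvd d \<longleftrightarrow> d = 0"
proof
  assume "int (Ngrid K) dvd d"
  then obtain e where e: "d = int (Ngrid K) * e" by blast
  show "d = 0"
  proof (rule ccontr)
    assume "d \<noteq> 0"
    then have "e \<noteq> 0" using e by simp
    then have "\<bar>e\<bar> \<ge> 1" by arith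
    then have "int (Ngrid K) * 1 \<le> int (Ngrid K) * \<bar>e\<bar>" by (intro mult_left_mono) auto
    then show False using assms e by (simp add: abs_mult)
  qed
qed simp

lemma geom0: "(\<Sum>x\<in>{0..<int (Ngrid K)}. chr K d x)
       = (if int (Ngrid K) dvd d then of_nat (Ngrid K) else 0)"
  using geom_int[where a=0 and d=d and K=K] unfolding chr_def by (simp only: add.left_neutral)

lemma modes_ivl: "{- int K..int K} = {- int K..<- int K + int (Ngrid K)}"
  by (auto simp: Ngrid_def)

lemma geomM: "(\<Sum>x\<in>{- int K..int K}. chr K d x)
       = (if int (Ngrid K) dvd d then of_nat (Ngrid K) else 0)"
  unfolding modes_ivl chr_def by (rule geom_int)

lemma orth_box:
  assumes "q \<in> M3 K" "q' \<in> M3 K"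
  shows "(\<Sum>p\<in>B3 K. ep K q p * cnj (ep K q' p)) = (if q = q' then of_nat (Ngrid K) ^ 3 else 0)"
proof -
  obtain a b c where q: "q = (a,b,c)" by (cases q)
  obtain a' b' c' where q': "q' = (a',b',c')" by (cases q')
  have sm: "\<bar>x - y\<bar> < int (Ngrid K)" if "x \<in> {- int K..int K}" "y \<in> {- int K..int K}" for x y
    using that by (auto simp: Ngrid_def)
  have "(\<Sum>p\<in>B3 K. ep K q p * cnj (ep K q' p)) = (\<Sum>p\<in>B3 K. ep K (q - q') p)"
    by (simp add: ep_mult_cnj)
  also have "\<dots> = (\<Sum>x\<in>{0..<int (Ngrid K)}. chr K (a - a') x) * (\<Sum>x\<in>{0..<int (Ngrid K)}. chr K (b - b') x)
     * (\<Sum>x\<in>{0..<int (Ngrid K)}. chr K (c - c') x)"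
    unfolding ep_split B3_def q q' diff_Pair fst_conv snd_conv by (rule sum_prod3)
  also have "\<dots> = (if int (Ngrid K) dvd (a - a') then of_nat (Ngrid K) else 0)
     * (if int (Ngrid K) dvd (b - b') then of_nat (Ngrid K) else 0)
     * (if int (Ngrid K) dvd (c - c') then of_nat (Ngrid K) else 0)"
    unfolding geom0 ..
  also have "\<dots> = (if q = q' then of_nat (Ngrid K) ^ 3 else 0)"
    using assms sm[of a a'] sm[of b b'] sm[of c c'] dvd_small[of "a - a'" K] dvd_small[of "b - b'" K] dvd_small[of "c - c'" K]
    by (auto simp: q q' M3_def power3_eq_cube)
  finally show ?thesis .
qed

lemma ep_sym: "ep K q p = ep K p q"
  unfolding ep_def dot_def by (simp add: mult.commute)

lemma orth_modes:
  "(\<Sum>q\<in>M3 K. ep K q p * cnj (ep K q p')) =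
     (if int (Ngrid K) dvd (fst p - fst p') then of_nat (Ngrid K) else 0)
     * (if int (Ngrid K) dvd (fst (snd p) - fst (snd p')) then of_nat (Ngrid K) else 0)
     * (if int (Ngrid K) dvd (snd (snd p) - snd (snd p')) then of_nat (Ngrid K) else 0)"
proof -
  have "(\<Sum>q\<in>M3 K. ep K q p * cnj (ep K q p')) = (\<Sum>q\<in>M3 K. ep K (p - p') q)"
    by (simp add: ep_sym[of K _ p] ep_sym[of K _ p'] ep_mult_cnj)
  also have "\<dots> = (if int (Ngrid K) dvd (fst p - fst p') then of_nat (Ngrid K) else 0)
     * (if int (Ngrid K) dvd (fst (snd p) - fst (snd p')) then of_nat (Ngrid K) else 0)
     * (if int (Ngrid K) dvd (snd (snd p) - snd (snd p')) then of_nat (Ngrid K) else 0)"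
    unfolding ep_split M3_def fst_diff snd_diff sum_prod3 geomM ..
  finally show ?thesis .
qed

lemma per_shift_nat:
  assumes "f \<in> grid_space K"
  shows "f (i + int t * int (Ngrid K)) j k = f i j k \<and> f i (j + int t * int (Ngrid K)) k = f i j k
     \<and> f i j (k + int t * int (Ngrid K)) = f i j k"
proof (induction t arbitrary: i j k)
  case 0 then show ?case by simp
next
  case (Suc t)
  have e: "x + int (Suc t) * int (Ngrid K) = (x + int t * int (Ngrid K)) + int (Ngrid K)" for x
    by (simp add: algebra_simps)
  show ?case using Suc assms unfolding e grid_space_def by simp
qed

lemma per_shift:
  assumes "f \<in> grid_space K"
  shows "f (i + t * int (Ngrid K)) j k = f i j k \<and> f i (j + t * int (Ngrid K)) k = f i j k
     \<and> f i j (k + t * int (Ngrid K)) = f i j k"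
proof (cases "t \<ge> 0")
  case True
  then obtain u where "t = int u" using nonneg_int_cases by blast
  then show ?thesis using per_shift_nat[OF assms] by simp
next
  case False
  define u where "u = nat (- t)"
  have u: "t = - int u" using False by (simp add: u_def)
  have a: "x = (x + t * int (Ngrid K)) + int u * int (Ngrid K)" for x by (simp add: u)
  show ?thesis
    using per_shift_nat[OF assms, where t=u and i="i + t * int (Ngrid K)" and j=j and k=k]
      per_shift_nat[OF assms, where t=u and i=i and j="j + t * int (Ngrid K)" and k=k]
      per_shift_nat[OF assms, where t=u and i=i and j=j and k="k + t * int (Ngrid K)"]
    by (simp add: a[symmetric])
qed

lemma per_mod:
  assumes "f \<in> grid_space K"
  shows "f (i mod int (Ngrid K)) (j mod int (Ngrid K)) (k mod int (Ngrid K)) = f i j k"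
proof -
  define n where "n = int (Ngrid K)"
  have m: "x mod n = x + (- (x div n)) * n" for x by (simp add: minus_div_mult_eq_mod[symmetric])
  have P: "f (x + t * n) y z = f x y z \<and> f x (y + t * n) z = f x y z \<and> f x y (z + t * n) = f x y z" for x y z t
    using per_shift[OF assms] unfolding n_def .
  have "f (i mod n) (j mod n) (k mod n) = f (i + (-(i div n))*n) (j + (-(j div n))*n) (k + (-(k div n))*n)"
    by (simp only: m)
  also have "\<dots> = f i (j + (-(j div n))*n) (k + (-(k div n))*n)" using P by blast
  also have "\<dots> = f i j (k + (-(k div n))*n)" using P by blast
  also have "\<dots> = f i j k" using P by blast
  finally show ?thesis unfolding n_def .
qed

lemma dvd_mod_iff: fixes x y n :: int
  assumes "0 \<le> y" "y < n" shows "n dvd (x - y) \<longleftrightarrow> y = x mod n"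
proof -
  have "n dvd (x - y) \<longleftrightarrow> x mod n = y mod n" by (simp add: mod_eq_dvd_iff)
  also have "y mod n = y" using assms by simp
  finally show ?thesis by auto
qed

lemma cN_N3: "complex_of_real (cN K) * of_nat (Ngrid K) ^ 3 = 1"
  using Ngrid_pos[of K] by (simp add: cN_def field_simps)

lemma inversion:
  assumes "f \<in> grid_space K"
  shows "complex_of_real (f i j k) = (\<Sum>q\<in>M3 K. fh K f q * ep K q (i,j,k))"
proof -
  define n where "n = int (Ngrid K)"
  define pm where "pm = (i mod n, j mod n, k mod n)"
  have n0: "n > 0" using Ngrid_pos[of K] by (simp add: n_def)
  have pmB: "pm \<in> B3 K" using n0 by (simp add: pm_def B3_def n_def[symmetric])
  have ind: "(\<Sum>q\<in>M3 K. ep K q (i,j,k) * cnj (ep K q p')) = (if p' = pm then of_nat (Ngrid K) ^ 3 else 0)"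
    if "p' \<in> B3 K" for p'
  proof -
    obtain a b c where p': "p' = (a,b,c)" by (cases p')
    have r: "0 \<le> a" "a < n" "0 \<le> b" "b < n" "0 \<le> c" "c < n" using that by (auto simp: p' B3_def n_def)
    show ?thesis unfolding orth_modes n_def[symmetric]
      using dvd_mod_iff[OF r(1,2), of i] dvd_mod_iff[OF r(3,4), of j] dvd_mod_iff[OF r(5,6), of k]
      by (auto simp: p' pm_def power3_eq_cube)
  qed
  have "(\<Sum>q\<in>M3 K. fh K f q * ep K q (i,j,k))
     = (\<Sum>q\<in>M3 K. \<Sum>p'\<in>B3 K. complex_of_real (cN K) * (complex_of_real (ev3 f p') * (ep K q (i,j,k) * cnj (ep K q p'))))"
    unfolding dft_alt by (simp add: sum_distrib_left sum_distrib_right mult_ac)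
  also have "\<dots> = (\<Sum>p'\<in>B3 K. complex_of_real (cN K) * (complex_of_real (ev3 f p') * (\<Sum>q\<in>M3 K. ep K q (i,j,k) * cnj (ep K q p'))))"
    by (subst sum.swap) (simp add: sum_distrib_left)
  also have "\<dots> = (\<Sum>p'\<in>B3 K. if p' = pm then complex_of_real (cN K) * (complex_of_real (ev3 f p') * of_nat (Ngrid K) ^ 3) else 0)"
    by (rule sum.cong) (simp_all add: ind)
  also have "\<dots> = complex_of_real (cN K) * (complex_of_real (ev3 f pm) * of_nat (Ngrid K) ^ 3)"
    using pmB by simp
  also have "\<dots> = complex_of_real (ev3 f pm)"
    using cN_N3[of K] by (simp add: mult_ac)
  also have "ev3 f pm = f i j k" using per_mod[OF assms] by (simp add: pm_def n_def)
  finally show ?thesis by simp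
qed

lemma M3_neg: "q \<in> M3 K \<Longrightarrow> - q \<in> M3 K"
  by (cases q) (auto simp: M3_def)

lemma herm_real:
  assumes "\<And>q. q \<in> M3 K \<Longrightarrow> c (- q) = cnj (c q)"
  shows "complex_of_real (Re (\<Sum>q\<in>M3 K. c q * ep K q p)) = (\<Sum>q\<in>M3 K. c q * ep K q p)"
proof -
  have "cnj (\<Sum>q\<in>M3 K. c q * ep K q p) = (\<Sum>q\<in>M3 K. c (- q) * ep K (- q) p)"
    by (simp add: assms ep_neg)
  also have "\<dots> = (\<Sum>q\<in>M3 K. c q * ep K q p)"
    by (rule sum.reindex_bij_witness[of _ uminus uminus]) (auto simp: M3_neg)
  finally show ?thesis using Reals_cnj_iff of_real_Re by metis
qed

definition herm :: "nat \<Rightarrow> (int \<Rightarrow> int \<Rightarrow> int \<Rightarrow> complex) \<Rightarrow> bool" where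
  "herm K \<tau> \<longleftrightarrow> (\<forall>q\<in>M3 K. ev3 \<tau> (- q) = cnj (ev3 \<tau> q))"

lemma spec_op_complex:
  assumes "herm K \<tau>"
  shows "complex_of_real (ev3 (spec_op K \<tau> f) p) = (\<Sum>q\<in>M3 K. ev3 \<tau> q * fh K f q * ep K q p)"
  unfolding spec_op_alt
  by (rule herm_real) (use assms in \<open>simp add: herm_def dft_neg\<close>)

lemma dft_spec:
  assumes "herm K \<tau>" "q' \<in> M3 K"
  shows "fh K (spec_op K \<tau> f) q' = ev3 \<tau> q' * fh K f q'"
proof -
  define c where "c = (\<lambda>q. ev3 \<tau> q * fh K f q)"
  have "fh K (spec_op K \<tau> f) q' = complex_of_real (cN K) * (\<Sum>p\<in>B3 K. (\<Sum>q\<in>M3 K. c q * ep K q p) * cnj (ep K q' p))"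
    unfolding dft_alt spec_op_complex[OF assms(1)] c_def ..
  also have "\<dots> = complex_of_real (cN K) * (\<Sum>q\<in>M3 K. c q * (\<Sum>p\<in>B3 K. ep K q p * cnj (ep K q' p)))"
    by (simp add: sum_distrib_left sum_distrib_right mult.assoc sum.swap[of _ "B3 K"])
  also have "\<dots> = complex_of_real (cN K) * (\<Sum>q\<in>M3 K. if q = q' then c q * of_nat (Ngrid K) ^ 3 else 0)"
    by (rule arg_cong[where f="\<lambda>x. _ * x"], rule sum.cong) (simp_all add: orth_box assms(2))
  also have "\<dots> = c q'" using assms(2) cN_N3[of K] by (simp add: mult_ac)
  finally show ?thesis unfolding c_def .
qed

lemma compose:
  assumes "herm K \<tau>"
  shows "spec_op K \<sigma> (spec_op K \<tau> f) = spec_op K (\<lambda>l m n. \<sigma> l m n * \<tau> l m n) f"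
proof (intro ext)
  fix i j k
  have e: "ev3 (\<lambda>l m n. \<sigma> l m n * \<tau> l m n) q = ev3 \<sigma> q * ev3 \<tau> q" for q by (simp add: ev3_def)
  show "spec_op K \<sigma> (spec_op K \<tau> f) i j k = spec_op K (\<lambda>l m n. \<sigma> l m n * \<tau> l m n) f i j k"
    unfolding spec_op_ev[of K \<sigma> "spec_op K \<tau> f"] spec_op_ev[of K "\<lambda>l m n. \<sigma> l m n * \<tau> l m n" f]
    by (rule arg_cong[where f=Re], rule sum.cong) (simp_all add: dft_spec[OF assms] e mult_ac)
qed

lemma fh_lin: "fh K (\<lambda>i j k. a * f i j k + b * g i j k) q = complex_of_real a * fh K f q + complex_of_real b * fh K g q"
proof -
  have e: "ev3 (\<lambda>i j k. a * f i j k + b * g i j k) p = a * ev3 f p + b * ev3 g p" for p by (simp add: ev3_def)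
  show ?thesis unfolding dft_alt e
    by (simp add: sum.distrib sum_distrib_left algebra_simps)
qed

lemma spec_op_lin: "spec_op K \<sigma> (\<lambda>i j k. a * f i j k + b * g i j k) i j k = a * spec_op K \<sigma> f i j k + b * spec_op K \<sigma> g i j k"
proof -
  have "(\<Sum>q\<in>M3 K. ev3 \<sigma> q * fh K (\<lambda>i j k. a * f i j k + b * g i j k) q * ep K q (i,j,k))
     = complex_of_real a * (\<Sum>q\<in>M3 K. ev3 \<sigma> q * fh K f q * ep K q (i,j,k)) + complex_of_real b * (\<Sum>q\<in>M3 K. ev3 \<sigma> q * fh K g q * ep K q (i,j,k))"
    unfolding fh_lin by (simp add: algebra_simps sum.distrib sum_distrib_left)
  then show ?thesis unfolding spec_op_ev by (simp only: plus_complex.sel Re_ofr_mult)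
qed

lemma spec_op_add: "spec_op K \<sigma> (\<lambda>i j k. f i j k + g i j k) i j k = spec_op K \<sigma> f i j k + spec_op K \<sigma> g i j k"
  using spec_op_lin[of K \<sigma> 1 f 1 g i j k] by simp
lemma spec_op_diff: "spec_op K \<sigma> (\<lambda>i j k. f i j k - g i j k) i j k = spec_op K \<sigma> f i j k - spec_op K \<sigma> g i j k"
  using spec_op_lin[of K \<sigma> 1 f "-1" g i j k] by simp
lemma spec_op_scale: "spec_op K \<sigma> (\<lambda>i j k. a * f i j k) i j k = a * spec_op K \<sigma> f i j k"
  using spec_op_lin[of K \<sigma> a f 0 f i j k] by simp

lemma spec_op_siglin: "spec_op K (\<lambda>l m n. complex_of_real a * \<sigma>1 l m n + complex_of_real b * \<sigma>2 l m n) f i j k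
   = a * spec_op K \<sigma>1 f i j k + b * spec_op K \<sigma>2 f i j k"
proof -
  have "(\<Sum>q\<in>M3 K. ev3 (\<lambda>l m n. complex_of_real a * \<sigma>1 l m n + complex_of_real b * \<sigma>2 l m n) q * fh K f q * ep K q (i,j,k))
     = complex_of_real a * (\<Sum>q\<in>M3 K. ev3 \<sigma>1 q * fh K f q * ep K q (i,j,k)) + complex_of_real b * (\<Sum>q\<in>M3 K. ev3 \<sigma>2 q * fh K f q * ep K q (i,j,k))"
    by (simp add: ev3_def algebra_simps sum.distrib sum_distrib_left)
  then show ?thesis unfolding spec_op_ev by (simp only: plus_complex.sel Re_ofr_mult)
qed

lemma ep_zero: "ep K 0 p = 1" by (simp add: ep_def dot_def)

lemma zero_M3: "0 \<in> M3 K" by (simp add: M3_def zero_prod_def)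

lemma fh_const: assumes "q \<in> M3 K" shows "fh K (\<lambda>_ _ _. c) q = (if q = 0 then complex_of_real c else 0)"
proof -
  have "fh K (\<lambda>_ _ _. c) q = complex_of_real c * (complex_of_real (cN K) * (\<Sum>p\<in>B3 K. ep K 0 p * cnj (ep K q p)))"
    unfolding dft_alt ep_zero by (simp add: ev3_def sum_distrib_left mult_ac)
  also have "\<dots> = (if q = 0 then complex_of_real c else 0)"
    unfolding orth_box[OF zero_M3 assms] using cN_N3[of K] by auto
  finally show ?thesis .
qed

lemma spec_op_const: assumes "ev3 \<sigma> 0 = 0" shows "spec_op K \<sigma> (\<lambda>_ _ _. c) i j k = 0"
proof -
  have "(\<Sum>q\<in>M3 K. ev3 \<sigma> q * fh K (\<lambda>_ _ _. c) q * ep K q (i,j,k)) = 0"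
    by (rule sum.neutral) (simp add: fh_const assms)
  then show ?thesis unfolding spec_op_ev by simp
qed

lemma gmean_fh: "gmean K f = Re (fh K f 0)"
  unfolding gmean_def ginner_alt dft_alt ep_zero by (simp add: ev3_def)

lemma gmean_spec: assumes "herm K \<sigma>" "ev3 \<sigma> 0 = 0" shows "gmean K (spec_op K \<sigma> f) = 0"
  unfolding gmean_fh dft_spec[OF assms(1) zero_M3] assms(2) by simp

lemma spec_op_id: assumes "f \<in> grid_space K" shows "spec_op K (\<lambda>l m n. complex_of_real c) f i j k = c * f i j k"
proof -
  have "(\<Sum>q\<in>M3 K. ev3 (\<lambda>l m n. complex_of_real c) q * fh K f q * ep K q (i,j,k))
     = complex_of_real c * (\<Sum>q\<in>M3 K. fh K f q * ep K q (i,j,k))"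
    by (simp add: ev3_def sum_distrib_left mult_ac)
  then show ?thesis unfolding spec_op_ev inversion[OF assms, symmetric] by simp
qed

lemma ginner_comm: "ginner K f g = ginner K g f"
  unfolding ginner_def by (simp add: mult.commute)

lemma quad_form: "ginner K (spec_op K (\<lambda>l m n. complex_of_real (s l m n)) f) f
   = (\<Sum>q\<in>M3 K. ev3 s q * ((Re (fh K f q))\<^sup>2 + (Im (fh K f q))\<^sup>2))"
proof -
  have "ev3 (\<lambda>l m n. complex_of_real (s l m n)) q * fh K f q * cnj (fh K f q)
      = complex_of_real (ev3 s q * ((Re (fh K f q))\<^sup>2 + (Im (fh K f q))\<^sup>2))" for q
    by (simp add: ev3_def mult.assoc complex_mult_cnj)
  then show ?thesis unfolding adjoint by simp
qed

lemma quad_nonneg: assumes "\<And>q. q \<in> M3 K \<Longrightarrow> ev3 s q \<ge> 0"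
  shows "ginner K (spec_op K (\<lambda>l m n. complex_of_real (s l m n)) f) f \<ge> 0"
  unfolding quad_form by (rule sum_nonneg) (simp add: assms)

lemma quad_zero: assumes "\<And>q. q \<in> M3 K \<Longrightarrow> ev3 s q \<le> 0"
  and "ginner K (spec_op K (\<lambda>l m n. complex_of_real (s l m n)) f) f = 0"
  shows "spec_op K (\<lambda>l m n. complex_of_real (s l m n)) f i j k = 0"
proof -
  have "(\<Sum>q\<in>M3 K. - (ev3 s q * ((Re (fh K f q))\<^sup>2 + (Im (fh K f q))\<^sup>2))) = 0"
    using assms(2) unfolding quad_form by (simp add: sum_negf)
  moreover have "\<forall>q\<in>M3 K. 0 \<le> - (ev3 s q * ((Re (fh K f q))\<^sup>2 + (Im (fh K f q))\<^sup>2))"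
    using assms(1) by (simp add: mult_nonpos_nonneg)
  ultimately have z0: "\<forall>q\<in>M3 K. - (ev3 s q * ((Re (fh K f q))\<^sup>2 + (Im (fh K f q))\<^sup>2)) = 0"
    using sum_nonneg_eq_0_iff[of "M3 K" "\<lambda>q. - (ev3 s q * ((Re (fh K f q))\<^sup>2 + (Im (fh K f q))\<^sup>2))"] by simp
  then have z: "\<forall>q\<in>M3 K. ev3 s q * ((Re (fh K f q))\<^sup>2 + (Im (fh K f q))\<^sup>2) = 0" by simp
  have "ev3 (\<lambda>l m n. complex_of_real (s l m n)) q * fh K f q = 0" if "q \<in> M3 K" for q
  proof -
    have "ev3 s q = 0 \<or> (Re (fh K f q))\<^sup>2 + (Im (fh K f q))\<^sup>2 = 0" using z that by simp
    then show ?thesis by (auto simp: ev3_def complex_eq_iff)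
  qed
  then have "(\<Sum>q\<in>M3 K. ev3 (\<lambda>l m n. complex_of_real (s l m n)) q * fh K f q * ep K q (i,j,k)) = 0"
    by (intro sum.neutral) simp
  then show ?thesis unfolding spec_op_ev by simp
qed

lemma sym_real: "ginner K (spec_op K (\<lambda>l m n. complex_of_real (s l m n)) f) g
   = ginner K f (spec_op K (\<lambda>l m n. complex_of_real (s l m n)) g)"
proof -
  have "Re (ev3 (\<lambda>l m n. complex_of_real (s l m n)) q * fh K f q * cnj (fh K g q))
      = Re (ev3 (\<lambda>l m n. complex_of_real (s l m n)) q * fh K g q * cnj (fh K f q))" for q
    by (simp add: ev3_def algebra_simps)
  then show ?thesis
    by (subst ginner_comm[of K f]) (simp only: adjoint Re_sum)
qed

lemma antisym_imag: "ginner K (spec_op K (\<lambda>l m n. \<i> * complex_of_real (s l m n)) f) g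
   = - ginner K f (spec_op K (\<lambda>l m n. \<i> * complex_of_real (s l m n)) g)"
proof -
  have "Re (ev3 (\<lambda>l m n. \<i> * complex_of_real (s l m n)) q * fh K f q * cnj (fh K g q))
      = - Re (ev3 (\<lambda>l m n. \<i> * complex_of_real (s l m n)) q * fh K g q * cnj (fh K f q))" for q
    by (simp add: ev3_def algebra_simps)
  then show ?thesis
    by (subst ginner_comm[of K f]) (simp only: adjoint Re_sum sum_negf)
qed

lemma Dx_adj: "ginner K (Dx K f) g = - ginner K f (Dx K g)"
  unfolding Dx_def by (rule antisym_imag)
lemma Dy_adj: "ginner K (Dy K f) g = - ginner K f (Dy K g)"
  unfolding Dy_def by (rule antisym_imag)
lemma Dz_adj: "ginner K (Dz K f) g = - ginner K f (Dz K g)"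
  unfolding Dz_def by (rule antisym_imag)

lemma ginner_lin_right: "ginner K f (\<lambda>i j k. a * g1 i j k + b * g2 i j k) = a * ginner K f g1 + b * ginner K f g2"
  unfolding ginner_alt by (simp add: ev3_def sum.distrib sum_distrib_left algebra_simps)

lemma ginner_add3_right: "ginner K f (\<lambda>i j k. g1 i j k + g2 i j k + g3 i j k) = ginner K f g1 + ginner K f g2 + ginner K f g3"
  unfolding ginner_alt by (simp add: ev3_def sum.distrib algebra_simps)

definition gsq :: "nat \<Rightarrow> grid \<Rightarrow> grid" where
  "gsq K \<phi> = (\<lambda>i j k. (Dx K \<phi> i j k)\<^sup>2 + (Dy K \<phi> i j k)\<^sup>2 + (Dz K \<phi> i j k)\<^sup>2)"

lemma plap_inner: "ginner K w (plap_term K \<phi>) =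
   - (ginner K (Dx K w) (\<lambda>i j k. gsq K \<phi> i j k * Dx K \<phi> i j k)
    + ginner K (Dy K w) (\<lambda>i j k. gsq K \<phi> i j k * Dy K \<phi> i j k)
    + ginner K (Dz K w) (\<lambda>i j k. gsq K \<phi> i j k * Dz K \<phi> i j k))"
proof -
  have "ginner K w (plap_term K \<phi>) = ginner K w (Dx K (\<lambda>i j k. gsq K \<phi> i j k * Dx K \<phi> i j k))
     + ginner K w (Dy K (\<lambda>i j k. gsq K \<phi> i j k * Dy K \<phi> i j k))
     + ginner K w (Dz K (\<lambda>i j k. gsq K \<phi> i j k * Dz K \<phi> i j k))"
    unfolding plap_term_def Let_def ndiv_def gsq_def by (rule ginner_add3_right)
  then show ?thesis
    by (simp only: ginner_comm[of K w] Dx_adj Dy_adj Dz_adj)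
qed

lemma mono_pt: fixes a1 a2 a3 b1 b2 b3 :: real
  shows "0 \<le> (a1 - b1) * ((a1\<^sup>2 + a2\<^sup>2 + a3\<^sup>2) * a1 - (b1\<^sup>2 + b2\<^sup>2 + b3\<^sup>2) * b1)
          + (a2 - b2) * ((a1\<^sup>2 + a2\<^sup>2 + a3\<^sup>2) * a2 - (b1\<^sup>2 + b2\<^sup>2 + b3\<^sup>2) * b2)
          + (a3 - b3) * ((a1\<^sup>2 + a2\<^sup>2 + a3\<^sup>2) * a3 - (b1\<^sup>2 + b2\<^sup>2 + b3\<^sup>2) * b3)"
proof -
  define A where "A = a1\<^sup>2 + a2\<^sup>2 + a3\<^sup>2"
  define B where "B = b1\<^sup>2 + b2\<^sup>2 + b3\<^sup>2"
  have "(a1 - b1) * (A * a1 - B * b1) + (a2 - b2) * (A * a2 - B * b2) + (a3 - b3) * (A * a3 - B * b3)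
      = (A + B) / 2 * ((a1 - b1)\<^sup>2 + (a2 - b2)\<^sup>2 + (a3 - b3)\<^sup>2) + (A - B)\<^sup>2 / 2"
    unfolding A_def B_def by (simp add: power2_eq_square field_simps)
  moreover have "0 \<le> (A + B) / 2 * ((a1 - b1)\<^sup>2 + (a2 - b2)\<^sup>2 + (a3 - b3)\<^sup>2) + (A - B)\<^sup>2 / 2"
    unfolding A_def B_def by (intro add_nonneg_nonneg mult_nonneg_nonneg divide_nonneg_nonneg) auto
  ultimately show ?thesis unfolding A_def B_def by simp
qed

lemma ginner_diff_right: "ginner K f (\<lambda>i j k. g i j k - h i j k) = ginner K f g - ginner K f h"
  using ginner_lin_right[of K f 1 g "-1" h] by simp

lemma ginner_add3_alt: "ginner K f1 g1 + ginner K f2 g2 + ginner K f3 g3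
  = cN K * (\<Sum>p\<in>B3 K. ev3 f1 p * ev3 g1 p + ev3 f2 p * ev3 g2 p + ev3 f3 p * ev3 g3 p)"
  unfolding ginner_alt by (simp add: sum.distrib distrib_left)

lemma plap_mono: "ginner K (\<lambda>i j k. \<phi> i j k - \<psi> i j k) (\<lambda>i j k. plap_term K \<psi> i j k - plap_term K \<phi> i j k) \<ge> 0"
proof -
  define w where "w = (\<lambda>i j k. \<phi> i j k - \<psi> i j k)"
  define F1 where "F1 = (\<lambda>\<xi>. (\<lambda>i j k. gsq K \<xi> i j k * Dx K \<xi> i j k))"
  define F2 where "F2 = (\<lambda>\<xi>. (\<lambda>i j k. gsq K \<xi> i j k * Dy K \<xi> i j k))"
  define F3 where "F3 = (\<lambda>\<xi>. (\<lambda>i j k. gsq K \<xi> i j k * Dz K \<xi> i j k))"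
  have "ginner K w (\<lambda>i j k. plap_term K \<psi> i j k - plap_term K \<phi> i j k)
      = ginner K w (plap_term K \<psi>) - ginner K w (plap_term K \<phi>)"
    by (rule ginner_diff_right)
  also have "\<dots> = (ginner K (Dx K w) (F1 \<phi>) - ginner K (Dx K w) (F1 \<psi>))
     + (ginner K (Dy K w) (F2 \<phi>) - ginner K (Dy K w) (F2 \<psi>))
     + (ginner K (Dz K w) (F3 \<phi>) - ginner K (Dz K w) (F3 \<psi>))"
    unfolding plap_inner F1_def F2_def F3_def by simp
  also have "\<dots> = ginner K (Dx K w) (\<lambda>i j k. F1 \<phi> i j k - F1 \<psi> i j k)
     + ginner K (Dy K w) (\<lambda>i j k. F2 \<phi> i j k - F2 \<psi> i j k)
     + ginner K (Dz K w) (\<lambda>i j k. F3 \<phi> i j k - F3 \<psi> i j k)"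
    by (simp only: ginner_diff_right)
  also have "\<dots> = cN K * (\<Sum>p\<in>B3 K. ev3 (Dx K w) p * ev3 (\<lambda>i j k. F1 \<phi> i j k - F1 \<psi> i j k) p
      + ev3 (Dy K w) p * ev3 (\<lambda>i j k. F2 \<phi> i j k - F2 \<psi> i j k) p
      + ev3 (Dz K w) p * ev3 (\<lambda>i j k. F3 \<phi> i j k - F3 \<psi> i j k) p)"
    by (rule ginner_add3_alt)
  also have "\<dots> \<ge> 0"
  proof (intro mult_nonneg_nonneg sum_nonneg less_imp_le[OF cN_pos])
    fix p :: idx
    obtain i j k where p: "p = (i,j,k)" by (cases p)
    have dw: "Dx K w i j k = Dx K \<phi> i j k - Dx K \<psi> i j k"
             "Dy K w i j k = Dy K \<phi> i j k - Dy K \<psi> i j k"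
             "Dz K w i j k = Dz K \<phi> i j k - Dz K \<psi> i j k"
      unfolding w_def Dx_def Dy_def Dz_def by (simp_all only: spec_op_diff)
    show "0 \<le> ev3 (Dx K w) p * ev3 (\<lambda>i j k. F1 \<phi> i j k - F1 \<psi> i j k) p
      + ev3 (Dy K w) p * ev3 (\<lambda>i j k. F2 \<phi> i j k - F2 \<psi> i j k) p
      + ev3 (Dz K w) p * ev3 (\<lambda>i j k. F3 \<phi> i j k - F3 \<psi> i j k) p"
      unfolding p ev3_tuple dw F1_def F2_def F3_def gsq_def by (rule mono_pt)
  qed
  finally show ?thesis unfolding w_def .
qed

definition lapS :: "int \<Rightarrow> int \<Rightarrow> int \<Rightarrow> real" where
  "lapS l m n = - 4 * pi ^ 2 * real_of_int (l ^ 2 + m ^ 2 + n ^ 2)"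

lemma Lap_eq: "Lap K = spec_op K (\<lambda>l m n. complex_of_real (lapS l m n))"
  unfolding Lap_def lapS_def ..

lemma lapS_nonpos: "lapS l m n \<le> 0"
  unfolding lapS_def by (simp add: mult_nonpos_nonneg)

lemma herm_real_even: assumes "\<And>l m n. s (-l) (-m) (-n) = s l m n"
  shows "herm K (\<lambda>l m n. complex_of_real (s l m n))"
  unfolding herm_def ev3_def using assms by simp

lemma herm_lap: "herm K (\<lambda>l m n. complex_of_real (lapS l m n))"
  by (rule herm_real_even) (simp add: lapS_def)

definition muG :: "nat \<Rightarrow> (int \<Rightarrow> int \<Rightarrow> int \<Rightarrow> real) \<Rightarrow> grid \<Rightarrow> grid \<Rightarrow> grid" where
  "muG K s h \<phi> = (\<lambda>i j k. - plap_term K \<phi> i j k + spec_op K (\<lambda>l m n. complex_of_real (s l m n)) \<phi> i j k + h i j k)"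

definition eqG :: "nat \<Rightarrow> real \<Rightarrow> (int \<Rightarrow> int \<Rightarrow> int \<Rightarrow> real) \<Rightarrow> grid \<Rightarrow> grid \<Rightarrow> grid \<Rightarrow> bool" where
  "eqG K dt s h c \<phi> \<longleftrightarrow> (\<lambda>i j k. 3 / 2 * (\<phi> i j k - c i j k) / dt) = Lap K (muG K s h \<phi>)"

lemma quad_nonpos: assumes "\<And>q. q \<in> M3 K \<Longrightarrow> ev3 s q \<le> 0"
  shows "ginner K (spec_op K (\<lambda>l m n. complex_of_real (s l m n)) f) f \<le> 0"
  unfolding quad_form by (rule sum_nonpos) (simp add: assms mult_nonpos_nonneg)

lemma ginner_scale_left: "ginner K (\<lambda>i j k. a * f i j k) g = a * ginner K f g"
  unfolding ginner_alt by (simp add: ev3_def sum_distrib_left algebra_simps)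

lemma uniqG:
  assumes dt: "dt > 0" and s: "\<And>q. q \<in> M3 K \<Longrightarrow> ev3 s q \<ge> 0"
    and e1: "eqG K dt s h c \<phi>" and e2: "eqG K dt s h c \<psi>"
  shows "\<phi> = \<psi>"
proof -
  define M where "M = spec_op K (\<lambda>l m n. complex_of_real (s l m n))"
  define w where "w = (\<lambda>i j k. \<phi> i j k - \<psi> i j k)"
  define v where "v = (\<lambda>i j k. muG K s h \<phi> i j k - muG K s h \<psi> i j k)"
  have v_eq: "v = (\<lambda>i j k. 1 * (plap_term K \<psi> i j k - plap_term K \<phi> i j k) + 1 * M w i j k)"
    unfolding v_def muG_def M_def w_def by (simp add: spec_op_diff fun_eq_iff algebra_simps)
  have Lv: "Lap K v i j k = 3 / (2 * dt) * w i j k" for i j k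
  proof -
    have "Lap K v i j k = Lap K (muG K s h \<phi>) i j k - Lap K (muG K s h \<psi>) i j k"
      unfolding v_def Lap_def by (rule spec_op_diff)
    also have "\<dots> = 3 / 2 * (\<phi> i j k - c i j k) / dt - 3 / 2 * (\<psi> i j k - c i j k) / dt"
      using fun_cong[OF fun_cong[OF fun_cong[OF e1[unfolded eqG_def]]], of i j k]
            fun_cong[OF fun_cong[OF fun_cong[OF e2[unfolded eqG_def]]], of i j k] by simp
    finally show ?thesis unfolding w_def using dt by (simp add: field_simps)
  qed
  have wv: "ginner K w v \<ge> 0"
  proof -
    have "ginner K w v = ginner K w (\<lambda>i j k. plap_term K \<psi> i j k - plap_term K \<phi> i j k) + ginner K (M w) w"
      unfolding v_eq ginner_lin_right by (simp add: ginner_comm[of K w "M w"])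
    moreover have "ginner K w (\<lambda>i j k. plap_term K \<psi> i j k - plap_term K \<phi> i j k) \<ge> 0"
      unfolding w_def by (rule plap_mono)
    moreover have "ginner K (M w) w \<ge> 0" unfolding M_def by (rule quad_nonneg) (rule s)
    ultimately show ?thesis by simp
  qed
  have "ginner K (Lap K v) v = 3 / (2 * dt) * ginner K w v"
  proof -
    have "Lap K v = (\<lambda>i j k. 3 / (2 * dt) * w i j k)" by (intro ext) (rule Lv)
    then show ?thesis using ginner_scale_left[of K "3 / (2 * dt)" w v] by simp
  qed
  moreover have "ginner K (Lap K v) v \<le> 0"
    unfolding Lap_eq by (rule quad_nonpos) (simp add: ev3_def lapS_nonpos)
  moreover have "3 / (2 * dt) * ginner K w v \<ge> 0"
    using wv dt by simp
  ultimately have z: "ginner K (Lap K v) v = 0" by linarith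
  have "Lap K v i j k = 0" for i j k
    using z unfolding Lap_eq by (intro quad_zero) (simp_all add: ev3_def lapS_nonpos)
  then have "w i j k = 0" for i j k using Lv[of i j k] dt by simp
  then show ?thesis unfolding w_def by (intro ext) simp
qed

definition iS :: "int \<Rightarrow> int \<Rightarrow> int \<Rightarrow> real" where
  "iS l m n = (if l = 0 \<and> m = 0 \<and> n = 0 then 0 else - 1 / lapS l m n)"

definition Pop :: "nat \<Rightarrow> grid \<Rightarrow> grid" where
  "Pop K = spec_op K (\<lambda>l m n. complex_of_real (iS l m n))"

lemma sq3_zero: fixes l m n :: int shows "l ^ 2 + m ^ 2 + n ^ 2 = 0 \<longleftrightarrow> l = 0 \<and> m = 0 \<and> n = 0"
proof -
  have "l ^ 2 + m ^ 2 + n ^ 2 = 0 \<longleftrightarrow> l ^ 2 = 0 \<and> m ^ 2 = 0 \<and> n ^ 2 = 0"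
    using zero_le_power2[of l] zero_le_power2[of m] zero_le_power2[of n] by linarith
  then show ?thesis by simp
qed

lemma lapS_neg_real: "lapS l m n < 0 \<longleftrightarrow> real_of_int (l ^ 2 + m ^ 2 + n ^ 2) > 0"
proof -
  have p: "4 * pi ^ 2 > 0" by simp
  have "lapS l m n = - ((4 * pi ^ 2) * real_of_int (l ^ 2 + m ^ 2 + n ^ 2))" unfolding lapS_def by simp
  then show ?thesis using p by (simp only: neg_less_0_iff_less zero_less_mult_iff) auto
qed

lemma lapS_pos_iff: "lapS l m n < 0 \<longleftrightarrow> \<not> (l = 0 \<and> m = 0 \<and> n = 0)"
proof -
  have "l ^ 2 + m ^ 2 + n ^ 2 > 0 \<longleftrightarrow> \<not> (l = 0 \<and> m = 0 \<and> n = 0)"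
    using sq3_zero[of l m n] zero_le_power2[of l] zero_le_power2[of m] zero_le_power2[of n] by linarith
  then show ?thesis unfolding lapS_neg_real by (simp only: of_int_0_less_iff)
qed

lemma iS_nonneg: "iS l m n \<ge> 0"
  unfolding iS_def using lapS_pos_iff[of l m n] by auto

lemma herm_iS: "herm K (\<lambda>l m n. complex_of_real (iS l m n))"
  by (rule herm_real_even) (simp add: iS_def lapS_def)

lemma fh_zero: "fh K u 0 = complex_of_real (gmean K u)"
  unfolding dft_alt ep_zero gmean_def ginner_alt by (simp add: ev3_def)

lemma Lap_Pop:
  assumes "u \<in> grid_space K"
  shows "Lap K (Pop K u) i j k = gmean K u - u i j k"
proof -
  have e: "ev3 (\<lambda>l m n. complex_of_real (lapS l m n) * complex_of_real (iS l m n)) q = (if q = 0 then 0 else -1)" for q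
  proof -
    obtain l m n where q: "q = (l,m,n)" by (cases q)
    show ?thesis using lapS_pos_iff[of l m n] by (auto simp: q iS_def zero_prod_def)
  qed
  have "Lap K (Pop K u) i j k = spec_op K (\<lambda>l m n. complex_of_real (lapS l m n) * complex_of_real (iS l m n)) u i j k"
    unfolding Lap_eq Pop_def by (simp only: compose[OF herm_iS])
  also have "\<dots> = Re (\<Sum>q\<in>M3 K. (if q = 0 then 0 else -1) * fh K u q * ep K q (i,j,k))"
    unfolding spec_op_ev e ..
  also have "(\<Sum>q\<in>M3 K. (if q = 0 then 0 else -1) * fh K u q * ep K q (i,j,k))
     = (\<Sum>q\<in>M3 K. (if q = 0 then fh K u q * ep K q (i,j,k) else 0) - fh K u q * ep K q (i,j,k))"
    by (rule sum.cong) auto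
  also have "\<dots> = fh K u 0 - (\<Sum>q\<in>M3 K. fh K u q * ep K q (i,j,k))"
    by (simp add: sum_subtractf zero_M3 ep_zero)
  also have "\<dots> = complex_of_real (gmean K u - u i j k)"
    unfolding inversion[OF assms, symmetric] fh_zero by simp
  finally show ?thesis by simp
qed

definition kap :: "nat \<Rightarrow> real" where "kap K = 1 / (4 * pi ^ 2 * (3 * real K ^ 2 + 1))"

lemma kap_pos: "kap K > 0"
proof -
  have "3 * real K ^ 2 + 1 > 0" using zero_le_power2[of "real K"] by linarith
  then show ?thesis unfolding kap_def by simp
qed

lemma iS_ge: assumes "(l,m,n) \<in> M3 K" "\<not> (l = 0 \<and> m = 0 \<and> n = 0)" shows "iS l m n \<ge> kap K"
proof -
  have b: "\<bar>l\<bar> \<le> int K" "\<bar>m\<bar> \<le> int K" "\<bar>n\<bar> \<le> int K" using assms(1) by (auto simp: M3_def)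
  have "l ^ 2 \<le> int K ^ 2" "m ^ 2 \<le> int K ^ 2" "n ^ 2 \<le> int K ^ 2"
    using b abs_le_square_iff[of l "int K"] abs_le_square_iff[of m "int K"] abs_le_square_iff[of n "int K"] by simp_all
  then have "l ^ 2 + m ^ 2 + n ^ 2 \<le> 3 * int K ^ 2 + 1" by linarith
  then have S: "real_of_int (l ^ 2 + m ^ 2 + n ^ 2) \<le> 3 * real K ^ 2 + 1"
    using of_int_le_iff[of "l ^ 2 + m ^ 2 + n ^ 2" "3 * int K ^ 2 + 1", where 'a=real] by simp
  have S0: "real_of_int (l ^ 2 + m ^ 2 + n ^ 2) > 0"
    using lapS_pos_iff[of l m n] assms(2) unfolding lapS_neg_real by simp
  have "iS l m n = 1 / (4 * pi ^ 2 * real_of_int (l ^ 2 + m ^ 2 + n ^ 2))"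
    using assms(2) by (simp add: iS_def lapS_def)
  also have "\<dots> \<ge> kap K" unfolding kap_def
    using S S0 by (intro divide_left_mono mult_left_mono mult_pos_pos) auto
  finally show ?thesis .
qed

lemma Pop_coercive:
  assumes "u \<in> grid_space K" "gmean K u = 0"
  shows "ginner K (Pop K u) u \<ge> kap K * ginner K u u"
proof -
  define nsq where "nsq = (\<lambda>q. (Re (fh K u q))\<^sup>2 + (Im (fh K u q))\<^sup>2)"
  have uu: "ginner K u u = (\<Sum>q\<in>M3 K. nsq q)"
  proof -
    have "spec_op K (\<lambda>l m n. complex_of_real 1) u = u"
      using spec_op_id[OF assms(1), of 1] by (intro ext) simp
    then show ?thesis using quad_form[of K "\<lambda>l m n. 1" u] by (simp add: nsq_def ev3_def)
  qed
  have "kap K * ginner K u u = (\<Sum>q\<in>M3 K. kap K * nsq q)" unfolding uu by (simp add: sum_distrib_left)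
  also have "\<dots> \<le> (\<Sum>q\<in>M3 K. ev3 iS q * nsq q)"
  proof (rule sum_mono)
    fix q assume q: "q \<in> M3 K"
    obtain l m n where qq: "q = (l,m,n)" by (cases q)
    show "kap K * nsq q \<le> ev3 iS q * nsq q"
    proof (cases "q = 0")
      case True
      then show ?thesis using assms(2) by (simp add: nsq_def fh_zero)
    next
      case False
      then have "iS l m n \<ge> kap K" using iS_ge[of l m n K] q by (auto simp: qq zero_prod_def)
      then show ?thesis by (simp add: qq nsq_def mult_right_mono)
    qed
  qed
  also have "\<dots> = ginner K (Pop K u) u" unfolding Pop_def quad_form nsq_def ..
  finally show ?thesis .
qed

definition addg :: "grid \<Rightarrow> grid \<Rightarrow> grid" where
  "addg c u = (\<lambda>i j k. c i j k + u i j k)"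

definition Mop :: "nat \<Rightarrow> (int \<Rightarrow> int \<Rightarrow> int \<Rightarrow> real) \<Rightarrow> grid \<Rightarrow> grid" where
  "Mop K s = spec_op K (\<lambda>l m n. complex_of_real (s l m n))"

definition eP :: "nat \<Rightarrow> real \<Rightarrow> (int \<Rightarrow> int \<Rightarrow> int \<Rightarrow> real) \<Rightarrow> grid \<Rightarrow> grid \<Rightarrow> grid \<Rightarrow> idx \<Rightarrow> real" where
  "eP K dt s h c u p = 3 / (4 * dt) * ev3 (Pop K u) p * ev3 u p + (ev3 (gsq K (addg c u)) p)\<^sup>2 / 4
     + 1 / 2 * ev3 (Mop K s (addg c u)) p * ev3 (addg c u) p + ev3 h p * ev3 (addg c u) p"

definition Eng :: "nat \<Rightarrow> real \<Rightarrow> (int \<Rightarrow> int \<Rightarrow> int \<Rightarrow> real) \<Rightarrow> grid \<Rightarrow> grid \<Rightarrow> grid \<Rightarrow> real" where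
  "Eng K dt s h c u = cN K * (\<Sum>p\<in>B3 K. eP K dt s h c u p)"

lemma deriv_Q:
  fixes A1 B1 A2 B2 X1 X2 X3 Y1 Y2 Y3 C1 C2 D1 D2 H a :: real
  shows "((\<lambda>t. a * (A1 + t * B1) * (A2 + t * B2) + ((X1 + t * Y1)\<^sup>2 + (X2 + t * Y2)\<^sup>2 + (X3 + t * Y3)\<^sup>2)\<^sup>2 / 4
       + 1 / 2 * (C1 + t * D1) * (C2 + t * D2) + H * (C2 + t * D2)) has_real_derivative
     (a * (A1 * B2 + B1 * A2) + (X1\<^sup>2 + X2\<^sup>2 + X3\<^sup>2) * (X1 * Y1 + X2 * Y2 + X3 * Y3)
       + 1 / 2 * (C1 * D2 + D1 * C2) + H * D2)) (at 0)"
  by (auto intro!: derivative_eq_intros simp: field_simps power2_eq_square)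

lemma spec_op_var: "spec_op K \<sigma> (\<lambda>i j k. f i j k + t * g i j k) i j k = spec_op K \<sigma> f i j k + t * spec_op K \<sigma> g i j k"
  using spec_op_lin[of K \<sigma> 1 f t g i j k] by simp

lemma addg_var: "addg c (\<lambda>i j k. u i j k + t * \<psi> i j k) = (\<lambda>i j k. addg c u i j k + t * \<psi> i j k)"
  unfolding addg_def by (simp add: algebra_simps)

lemma eP_var: "eP K dt s h c (\<lambda>i j k. u i j k + t * \<psi> i j k) p =
   (let A1 = ev3 (Pop K u) p; B1 = ev3 (Pop K \<psi>) p; A2 = ev3 u p; B2 = ev3 \<psi> p;
        X1 = ev3 (Dx K (addg c u)) p; Y1 = ev3 (Dx K \<psi>) p;
        X2 = ev3 (Dy K (addg c u)) p; Y2 = ev3 (Dy K \<psi>) p;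
        X3 = ev3 (Dz K (addg c u)) p; Y3 = ev3 (Dz K \<psi>) p;
        C1 = ev3 (Mop K s (addg c u)) p; D1 = ev3 (Mop K s \<psi>) p;
        C2 = ev3 (addg c u) p; D2 = ev3 \<psi> p; H = ev3 h p in
    3 / (4 * dt) * (A1 + t * B1) * (A2 + t * B2) + ((X1 + t * Y1)\<^sup>2 + (X2 + t * Y2)\<^sup>2 + (X3 + t * Y3)\<^sup>2)\<^sup>2 / 4
       + 1 / 2 * (C1 + t * D1) * (C2 + t * D2) + H * (C2 + t * D2))"
  unfolding eP_def addg_var Let_def gsq_def ev3_def Pop_def Mop_def Dx_def Dy_def Dz_def spec_op_var ..

definition Qd :: "nat \<Rightarrow> real \<Rightarrow> (int \<Rightarrow> int \<Rightarrow> int \<Rightarrow> real) \<Rightarrow> grid \<Rightarrow> grid \<Rightarrow> grid \<Rightarrow> grid \<Rightarrow> idx \<Rightarrow> real" where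
  "Qd K dt s h c u \<psi> p =
    3 / (4 * dt) * (ev3 (Pop K u) p * ev3 \<psi> p + ev3 (Pop K \<psi>) p * ev3 u p)
    + ((ev3 (Dx K (addg c u)) p)\<^sup>2 + (ev3 (Dy K (addg c u)) p)\<^sup>2 + (ev3 (Dz K (addg c u)) p)\<^sup>2)
      * (ev3 (Dx K (addg c u)) p * ev3 (Dx K \<psi>) p + ev3 (Dy K (addg c u)) p * ev3 (Dy K \<psi>) p
         + ev3 (Dz K (addg c u)) p * ev3 (Dz K \<psi>) p)
    + 1 / 2 * (ev3 (Mop K s (addg c u)) p * ev3 \<psi> p + ev3 (Mop K s \<psi>) p * ev3 (addg c u) p)
    + ev3 h p * ev3 \<psi> p"

lemma Eng_deriv:
  "((\<lambda>t. Eng K dt s h c (\<lambda>i j k. u i j k + t * \<psi> i j k)) has_real_derivative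
     cN K * (\<Sum>p\<in>B3 K. Qd K dt s h c u \<psi> p)) (at 0)"
  unfolding Eng_def eP_var Let_def
  by (intro DERIV_cmult DERIV_sum) (unfold Qd_def, rule deriv_Q)

lemma Eng_first_order:
  assumes "\<And>t. Eng K dt s h c u \<le> Eng K dt s h c (\<lambda>i j k. u i j k + t * \<psi> i j k)"
  shows "cN K * (\<Sum>p\<in>B3 K. Qd K dt s h c u \<psi> p) = 0"
proof -
  have e: "Eng K dt s h c (\<lambda>i j k. u i j k + 0 * \<psi> i j k) = Eng K dt s h c u"
    by simp
  show ?thesis
    by (rule DERIV_local_min[OF Eng_deriv, of 1]) (use assms e in auto)
qed

definition Tf :: "nat \<Rightarrow> real \<Rightarrow> (int \<Rightarrow> int \<Rightarrow> int \<Rightarrow> real) \<Rightarrow> grid \<Rightarrow> grid \<Rightarrow> grid \<Rightarrow> grid" where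
  "Tf K dt s h c u = (\<lambda>i j k. 3 / (2 * dt) * Pop K u i j k + muG K s h (addg c u) i j k)"

lemma ginner_4: "ginner K f (\<lambda>i j k. a * g1 i j k + (- g2 i j k + g3 i j k + g4 i j k))
   = a * ginner K f g1 - ginner K f g2 + ginner K f g3 + ginner K f g4"
  unfolding ginner_alt by (simp add: ev3_def sum.distrib sum_subtractf sum_distrib_left algebra_simps)

lemma Qd_ginner: "cN K * (\<Sum>p\<in>B3 K. Qd K dt s h c u \<psi> p) = ginner K \<psi> (Tf K dt s h c u)"
proof -
  define \<phi> where "\<phi> = addg c u"
  define a where "a = 3 / (4 * dt)"
  define b :: real where "b = 1 / 2"
  define F1 where "F1 = (\<lambda>i j k. gsq K \<phi> i j k * Dx K \<phi> i j k)"
  define F2 where "F2 = (\<lambda>i j k. gsq K \<phi> i j k * Dy K \<phi> i j k)"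
  define F3 where "F3 = (\<lambda>i j k. gsq K \<phi> i j k * Dz K \<phi> i j k)"
  have q: "Qd K dt s h c u \<psi> p = a * (ev3 (Pop K u) p * ev3 \<psi> p) + a * (ev3 (Pop K \<psi>) p * ev3 u p)
     + ev3 (Dx K \<psi>) p * ev3 F1 p + ev3 (Dy K \<psi>) p * ev3 F2 p + ev3 (Dz K \<psi>) p * ev3 F3 p
     + b * (ev3 (Mop K s \<phi>) p * ev3 \<psi> p) + b * (ev3 (Mop K s \<psi>) p * ev3 \<phi> p) + ev3 h p * ev3 \<psi> p" for p
    unfolding Qd_def a_def b_def F1_def F2_def F3_def \<phi>_def gsq_def ev3_def by (simp add: algebra_simps)
  have S1a: "cN K * (\<Sum>p\<in>B3 K. Qd K dt s h c u \<psi> p)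
     = cN K * (a * (\<Sum>p\<in>B3 K. ev3 (Pop K u) p * ev3 \<psi> p) + a * (\<Sum>p\<in>B3 K. ev3 (Pop K \<psi>) p * ev3 u p)
     + (\<Sum>p\<in>B3 K. ev3 (Dx K \<psi>) p * ev3 F1 p) + (\<Sum>p\<in>B3 K. ev3 (Dy K \<psi>) p * ev3 F2 p) + (\<Sum>p\<in>B3 K. ev3 (Dz K \<psi>) p * ev3 F3 p)
     + b * (\<Sum>p\<in>B3 K. ev3 (Mop K s \<phi>) p * ev3 \<psi> p) + b * (\<Sum>p\<in>B3 K. ev3 (Mop K s \<psi>) p * ev3 \<phi> p) + (\<Sum>p\<in>B3 K. ev3 h p * ev3 \<psi> p))"
    unfolding q by (simp only: sum.distrib sum_distrib_left[symmetric])
  have S1b: "cN K * (a * (\<Sum>p\<in>B3 K. ev3 (Pop K u) p * ev3 \<psi> p) + a * (\<Sum>p\<in>B3 K. ev3 (Pop K \<psi>) p * ev3 u p)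
     + (\<Sum>p\<in>B3 K. ev3 (Dx K \<psi>) p * ev3 F1 p) + (\<Sum>p\<in>B3 K. ev3 (Dy K \<psi>) p * ev3 F2 p) + (\<Sum>p\<in>B3 K. ev3 (Dz K \<psi>) p * ev3 F3 p)
     + b * (\<Sum>p\<in>B3 K. ev3 (Mop K s \<phi>) p * ev3 \<psi> p) + b * (\<Sum>p\<in>B3 K. ev3 (Mop K s \<psi>) p * ev3 \<phi> p) + (\<Sum>p\<in>B3 K. ev3 h p * ev3 \<psi> p))
     = a * ginner K (Pop K u) \<psi> + a * ginner K (Pop K \<psi>) u
       + ginner K (Dx K \<psi>) F1 + ginner K (Dy K \<psi>) F2 + ginner K (Dz K \<psi>) F3
       + b * ginner K (Mop K s \<phi>) \<psi> + b * ginner K (Mop K s \<psi>) \<phi> + ginner K h \<psi>"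
    unfolding ginner_alt by (simp only: distrib_left mult.left_commute)
  have g2: "ginner K (Pop K \<psi>) u = ginner K (Pop K u) \<psi>"
    unfolding Pop_def by (subst sym_real) (rule ginner_comm)
  have g7: "ginner K (Mop K s \<psi>) \<phi> = ginner K (Mop K s \<phi>) \<psi>"
    unfolding Mop_def by (subst sym_real) (rule ginner_comm)
  have g345: "ginner K (Dx K \<psi>) F1 + ginner K (Dy K \<psi>) F2 + ginner K (Dz K \<psi>) F3 = - ginner K \<psi> (plap_term K \<phi>)"
    unfolding plap_inner F1_def F2_def F3_def by simp
  have L0: "cN K * (\<Sum>p\<in>B3 K. Qd K dt s h c u \<psi> p)
     = (a + a) * ginner K (Pop K u) \<psi> + (ginner K (Dx K \<psi>) F1 + ginner K (Dy K \<psi>) F2 + ginner K (Dz K \<psi>) F3)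
       + (b + b) * ginner K (Mop K s \<phi>) \<psi> + ginner K h \<psi>"
    unfolding S1a S1b g2 g7 by (simp add: algebra_simps)
  have ab: "a + a = 3 / (2 * dt)" "b + b = 1" unfolding a_def b_def by simp_all
  have L: "cN K * (\<Sum>p\<in>B3 K. Qd K dt s h c u \<psi> p)
     = 3 / (2 * dt) * ginner K (Pop K u) \<psi> - ginner K \<psi> (plap_term K \<phi>) + ginner K (Mop K s \<phi>) \<psi> + ginner K h \<psi>"
    unfolding L0 ab g345 by simp

  have R: "ginner K \<psi> (Tf K dt s h c u) = 3 / (2 * dt) * ginner K (Pop K u) \<psi> - ginner K \<psi> (plap_term K \<phi>) + ginner K (Mop K s \<phi>) \<psi> + ginner K h \<psi>"
    unfolding Tf_def muG_def ginner_4 \<phi>_def Mop_def by (simp only: ginner_comm[of K \<psi>])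
  show ?thesis using L R by simp
qed

lemma eval_cont[continuous_intros]: "continuous_on S (\<lambda>u::grid. u i j k)"
proof -
  have "continuous_on S (\<lambda>u::grid. u)" by (rule continuous_on_id)
  then have "continuous_on S (\<lambda>u::grid. u i)" by (rule continuous_on_product_then_coordinatewise)
  then have "continuous_on S (\<lambda>u::grid. u i j)" by (rule continuous_on_product_then_coordinatewise)
  then show ?thesis by (rule continuous_on_product_then_coordinatewise)
qed

lemma compact_fun_set:
  fixes A :: "'b::topological_space set"
  assumes "compact A" shows "compact {f :: 'a \<Rightarrow> 'b. \<forall>x. f x \<in> A}"
proof -
  have e: "{f :: 'a \<Rightarrow> 'b. \<forall>x. f x \<in> A} = PiE UNIV (\<lambda>_. A)" by (auto simp: PiE_def Pi_def)
  have "compactin (product_topology (\<lambda>_. euclidean) UNIV) (PiE UNIV (\<lambda>_::'a. A))"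
    using assms by (simp add: compactin_PiE)
  then show ?thesis unfolding e euclidean_product_topology by simp
qed

definition Bx :: "real \<Rightarrow> grid set" where "Bx R = {u. \<forall>i j k. u i j k \<in> {-R..R}}"

lemma compact_Bx: "compact (Bx R)"
proof -
  have e: "Bx R = {u. \<forall>i. u i \<in> {v. \<forall>j. v j \<in> {w. \<forall>k. w k \<in> {-R..R}}}}"
    unfolding Bx_def by simp
  show ?thesis unfolding e by (intro compact_fun_set compact_Icc)
qed

definition Xs :: "nat \<Rightarrow> grid set" where "Xs K = {u. u \<in> grid_space K \<and> gmean K u = 0}"

lemma closed_grid_space: "closed (grid_space K)"
proof -
  have e: "grid_space K = {f. \<forall>i. \<forall>j. \<forall>k.
      f (i + int (Ngrid K)) j k = f i j k \<and> f i (j + int (Ngrid K)) k = f i j k \<and> f i j (k + int (Ngrid K)) = f i j k}"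
    unfolding grid_space_def ..
  show ?thesis unfolding e
    by (intro closed_Collect_all closed_Collect_conj closed_Collect_eq eval_cont)
qed

lemma gmean_cont[continuous_intros]: "continuous_on S (\<lambda>u. gmean K u)"
  unfolding gmean_def ginner_def by (intro continuous_intros)

lemma closed_Xs: "closed (Xs K)"
proof -
  have e: "Xs K = grid_space K \<inter> {u. gmean K u = (\<lambda>_. 0) u}" unfolding Xs_def by auto
  show ?thesis unfolding e
    by (intro closed_Int closed_grid_space closed_Collect_eq gmean_cont continuous_on_const)
qed

lemma spec_op_cont[continuous_intros]:
  assumes "\<And>i j k. continuous_on S (\<lambda>u. F u i j k)"
  shows "continuous_on S (\<lambda>u. spec_op K \<sigma> (F u) i j k)"
  unfolding spec_op_def dft_def by (intro continuous_intros assms)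

lemma Eng_cont: "continuous_on S (Eng K dt s h c)"
  unfolding Eng_def eP_def ev3_def Pop_def Mop_def gsq_def addg_def Dx_def Dy_def Dz_def
  by (intro continuous_intros) auto

lemma Eng_split: "Eng K dt s h c u = 3 / (4 * dt) * ginner K (Pop K u) u
   + cN K * (\<Sum>p\<in>B3 K. (ev3 (gsq K (addg c u)) p)\<^sup>2 / 4)
   + 1 / 2 * ginner K (Mop K s (addg c u)) (addg c u) + ginner K h (addg c u)"
  unfolding Eng_def eP_def ginner_alt
  by (simp add: sum.distrib sum_distrib_left algebra_simps)

lemma ginner_nonneg_self: "ginner K u u \<ge> 0"
  unfolding ginner_alt by (intro mult_nonneg_nonneg sum_nonneg less_imp_le[OF cN_pos] zero_le_square)

lemma young_pt: fixes x y e :: real assumes "e > 0"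
  shows "x * y \<ge> - (e / 2) * y\<^sup>2 - x\<^sup>2 / (2 * e)"
proof -
  have "0 \<le> (e * y + x)\<^sup>2 / (2 * e)" using assms by simp
  also have "(e * y + x)\<^sup>2 / (2 * e) = (e / 2) * y\<^sup>2 + x * y + x\<^sup>2 / (2 * e)"
    using assms by (simp add: field_simps power2_eq_square)
  finally show ?thesis by simp
qed

lemma young_ginner: assumes "e > 0"
  shows "ginner K h u \<ge> - (e / 2) * ginner K u u - ginner K h h / (2 * e)"
proof -
  have "cN K * (\<Sum>p\<in>B3 K. - (e / 2) * (ev3 u p * ev3 u p) - ev3 h p * ev3 h p / (2 * e)) \<le> cN K * (\<Sum>p\<in>B3 K. ev3 h p * ev3 u p)"
    using cN_pos[of K] young_pt[OF assms] by (intro mult_left_mono sum_mono) (auto simp: power2_eq_square)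
  then show ?thesis unfolding ginner_alt
    by (simp add: sum_subtractf sum_distrib_left sum_divide_distrib algebra_simps)
qed

lemma ginner_addg: "ginner K h (addg c u) = ginner K h c + ginner K h u"
  unfolding ginner_alt addg_def by (simp add: ev3_def sum.distrib algebra_simps)

lemma Eng_coercive:
  assumes dt: "dt > 0" and s: "\<And>q. q \<in> M3 K \<Longrightarrow> ev3 s q \<ge> 0"
  shows "\<exists>\<alpha>>0. \<exists>C. \<forall>u\<in>Xs K. Eng K dt s h c u \<ge> \<alpha> * ginner K u u - C"
proof -
  define a0 where "a0 = 3 / (4 * dt) * kap K"
  have a0: "a0 > 0" using dt kap_pos[of K] by (simp add: a0_def)
  define C where "C = ginner K h h / (2 * a0) - ginner K h c"
  have "Eng K dt s h c u \<ge> a0 / 2 * ginner K u u - C" if u: "u \<in> Xs K" for u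
  proof -
    have P0: "3 / (4 * dt) * (kap K * ginner K u u) \<le> 3 / (4 * dt) * ginner K (Pop K u) u"
      using Pop_coercive[of u K] u dt unfolding Xs_def by (intro mult_left_mono) auto
    have P: "3 / (4 * dt) * ginner K (Pop K u) u \<ge> a0 * ginner K u u"
      using P0 unfolding a0_def by (simp only: mult.assoc)
    have G: "cN K * (\<Sum>p\<in>B3 K. (ev3 (gsq K (addg c u)) p)\<^sup>2 / 4) \<ge> 0"
      using cN_pos[of K] by (intro mult_nonneg_nonneg sum_nonneg) auto
    have M: "1 / 2 * ginner K (Mop K s (addg c u)) (addg c u) \<ge> 0"
      unfolding Mop_def using quad_nonneg[OF s] by simp
    have Y: "ginner K h u \<ge> - (a0 / 2) * ginner K u u - ginner K h h / (2 * a0)"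
      by (rule young_ginner[OF a0])
    show ?thesis using P G M Y unfolding Eng_split ginner_addg C_def by linarith
  qed
  then show ?thesis using a0 by (intro exI[of _ "a0 / 2"]) auto
qed

lemma ginner_ge_point: assumes "p \<in> B3 K" shows "ginner K u u \<ge> cN K * (ev3 u p)\<^sup>2"
proof -
  have "(ev3 u p)\<^sup>2 \<le> (\<Sum>p\<in>B3 K. ev3 u p * ev3 u p)"
    using assms by (subst power2_eq_square, rule member_le_sum) auto
  then show ?thesis unfolding ginner_alt using cN_pos[of K] by (simp add: mult_left_mono)
qed

lemma spec_op_shift[simp]:
  "spec_op K \<sigma> f (i + int (Ngrid K)) j k = spec_op K \<sigma> f i j k"
  "spec_op K \<sigma> f i (j + int (Ngrid K)) k = spec_op K \<sigma> f i j k"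
  "spec_op K \<sigma> f i j (k + int (Ngrid K)) = spec_op K \<sigma> f i j k"
  using spec_op_periodic[of K \<sigma> f] unfolding grid_space_def by auto

lemma spec_op_box:
  assumes "\<And>p. p \<in> B3 K \<Longrightarrow> ev3 f p = ev3 g p"
  shows "spec_op K \<sigma> f = spec_op K \<sigma> g"
proof -
  have "fh K f q = fh K g q" for q unfolding dft_alt using assms by (intro arg_cong[where f="\<lambda>x. _ * x"] sum.cong) auto
  then show ?thesis by (intro ext) (simp add: spec_op_ev)
qed

lemma card_B3: "card (B3 K) = Ngrid K ^ 3"
  by (simp add: B3_def card_cartesian_product power3_eq_cube)

lemma gmean_const: "gmean K (\<lambda>_ _ _. c) = c"
proof -
  have "gmean K (\<lambda>_ _ _. c) = cN K * (c * real (Ngrid K ^ 3))"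
    unfolding gmean_def ginner_alt by (simp add: ev3_def card_B3)
  then show ?thesis using Ngrid_pos[of K] by (simp add: cN_def field_simps)
qed

lemma gmean_lin: "gmean K (\<lambda>i j k. a * f i j k + b * g i j k) = a * gmean K f + b * gmean K g"
  unfolding gmean_def ginner_alt by (simp add: ev3_def sum.distrib sum_distrib_left algebra_simps)

lemma gs_lin: assumes "f \<in> grid_space K" "g \<in> grid_space K"
  shows "(\<lambda>i j k. a * f i j k + b * g i j k) \<in> grid_space K"
  using assms unfolding grid_space_def by simp

lemma zero_Xs: "(\<lambda>_ _ _. 0) \<in> Xs K"
  unfolding Xs_def grid_space_def using gmean_const[of K 0] by simp

lemma Xs_lin: assumes "u \<in> Xs K" "\<psi> \<in> Xs K" shows "(\<lambda>i j k. u i j k + t * \<psi> i j k) \<in> Xs K"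
proof -
  have "(\<lambda>i j k. 1 * u i j k + t * \<psi> i j k) \<in> grid_space K" using assms unfolding Xs_def by (intro gs_lin) auto
  moreover have "gmean K (\<lambda>i j k. 1 * u i j k + t * \<psi> i j k) = 0" using assms unfolding Xs_def gmean_lin by simp
  ultimately show ?thesis unfolding Xs_def by simp
qed

lemma existG:
  assumes dt: "dt > 0" and s: "\<And>q. q \<in> M3 K \<Longrightarrow> ev3 s q \<ge> 0"
    and hp: "h \<in> grid_space K" and cp: "c \<in> grid_space K"
  shows "\<exists>\<phi> \<in> grid_space K. eqG K dt s h c \<phi>"
proof -
  obtain \<alpha> C where al: "\<alpha> > 0" and co: "\<And>u. u \<in> Xs K \<Longrightarrow> Eng K dt s h c u \<ge> \<alpha> * ginner K u u - C"
    using Eng_coercive[OF dt s, where h=h and c=c] by blast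
  define E where "E = Eng K dt s h c"
  define z :: grid where "z = (\<lambda>_ _ _. 0)"
  have zX: "z \<in> Xs K" unfolding z_def by (rule zero_Xs)
  define R where "R = 1 + \<bar>E z + C\<bar> / (\<alpha> * cN K)"
  have aN: "\<alpha> * cN K > 0" using al cN_pos[of K] by simp
  have R1: "R \<ge> 1" unfolding R_def using aN by simp
  define S where "S = Xs K \<inter> Bx R"
  have cS: "compact S" unfolding S_def by (intro closed_Int_compact closed_Xs compact_Bx)
  have zS: "z \<in> S" unfolding S_def Bx_def using zX R1 by (simp add: z_def)
  obtain u0 where u0S: "u0 \<in> S" and u0min: "\<And>y. y \<in> S \<Longrightarrow> E u0 \<le> E y"
    using continuous_attains_inf[OF cS _ Eng_cont, of K dt s h c] zS unfolding E_def by blast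
  have u0X: "u0 \<in> Xs K" using u0S unfolding S_def by simp
  have glob: "E u0 \<le> E v" if vX: "v \<in> Xs K" for v
  proof (cases "v \<in> Bx R")
    case True then show ?thesis using u0min vX unfolding S_def by simp
  next
    case False
    then obtain i j k where vb: "v i j k \<notin> {-R..R}" unfolding Bx_def by blast
    define n where "n = int (Ngrid K)"
    have n0: "n > 0" using Ngrid_pos[of K] by (simp add: n_def)
    define p where "p = (i mod n, j mod n, k mod n)"
    have pB: "p \<in> B3 K" using n0 unfolding p_def B3_def n_def[symmetric] by simp
    have vp: "ev3 v p = v i j k" using per_mod[of v K i j k] vX unfolding Xs_def p_def n_def by simp
    have ax: "R < \<bar>v i j k\<bar>" using vb by auto
    have "R * R < \<bar>v i j k\<bar> * \<bar>v i j k\<bar>" using ax R1 by (intro mult_strict_mono) auto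
    then have RR: "R * R < (v i j k)\<^sup>2" by (simp add: power2_eq_square)
    have "R * 1 \<le> R * R" using R1 by (intro mult_left_mono) auto
    then have "R < (v i j k)\<^sup>2" using RR by linarith
    then have "cN K * R < cN K * (v i j k)\<^sup>2" using cN_pos[of K] by simp
    also have "\<dots> \<le> ginner K v v" using ginner_ge_point[OF pB, of v] vp by simp
    finally have g: "cN K * R < ginner K v v" .
    have "\<alpha> * (cN K * R) = \<alpha> * cN K + \<bar>E z + C\<bar>" unfolding R_def using aN al cN_pos[of K] by (simp add: field_simps)
    moreover have "\<alpha> * (cN K * R) < \<alpha> * ginner K v v" by (rule mult_strict_left_mono[OF g al])
    ultimately have "\<alpha> * ginner K v v > \<alpha> * cN K + \<bar>E z + C\<bar>" by linarith
    then have "E v > E z" using co[OF vX] aN unfolding E_def by linarith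
    moreover have "E u0 \<le> E z" using u0min zS by simp
    ultimately show ?thesis by simp
  qed
  define T where "T = Tf K dt s h c u0"
  have foc: "ginner K \<psi> T = 0" if "\<psi> \<in> Xs K" for \<psi>
  proof -
    have "\<And>t. Eng K dt s h c u0 \<le> Eng K dt s h c (\<lambda>i j k. u0 i j k + t * \<psi> i j k)"
      using glob[OF Xs_lin[OF u0X that]] unfolding E_def .
    then have "cN K * (\<Sum>p\<in>B3 K. Qd K dt s h c u0 \<psi> p) = 0" by (rule Eng_first_order)
    then show ?thesis using Qd_ginner[of K dt s h c u0 \<psi>] unfolding T_def by simp
  qed
  have Tp: "T \<in> grid_space K"
    using hp unfolding T_def Tf_def muG_def plap_term_def Let_def ndiv_def Pop_def Mop_def Dx_def Dy_def Dz_def grid_space_def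
    by simp
  define m where "m = gmean K T"
  define \<psi> where "\<psi> = (\<lambda>i j k. 1 * T i j k + (- m) * 1)"
  have \<psi>X: "\<psi> \<in> Xs K"
  proof -
    have "\<psi> \<in> grid_space K" unfolding \<psi>_def using Tp unfolding grid_space_def by simp
    moreover have "gmean K \<psi> = 0" unfolding \<psi>_def gmean_lin gmean_const m_def by simp
    ultimately show ?thesis unfolding Xs_def by simp
  qed
  have "ginner K \<psi> \<psi> = 1 * ginner K \<psi> T + (- m) * ginner K \<psi> (\<lambda>_ _ _. 1)"
    by (subst (2) \<psi>_def) (rule ginner_lin_right)
  also have "ginner K \<psi> (\<lambda>_ _ _. 1) = 0" using \<psi>X unfolding Xs_def gmean_def by simp
  finally have "ginner K \<psi> \<psi> = 0" using foc[OF \<psi>X] by simp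
  then have \<psi>0: "ev3 \<psi> p = 0" if "p \<in> B3 K" for p
  proof -
    have "cN K * (ev3 \<psi> p)\<^sup>2 \<le> 0" using ginner_ge_point[OF that, of \<psi>] \<open>ginner K \<psi> \<psi> = 0\<close> by simp
    then have "(ev3 \<psi> p)\<^sup>2 \<le> 0" using cN_pos[of K] by (simp add: mult_le_0_iff)
    then show ?thesis by simp
  qed
  have LT: "Lap K T i j k = 0" for i j k
  proof -
    have e: "Lap K T = Lap K (\<lambda>_ _ _. m)"
      unfolding Lap_def by (rule spec_op_box) (use \<psi>0 in \<open>auto simp: \<psi>_def ev3_def\<close>)
    have "Lap K (\<lambda>_ _ _. m) i j k = 0" unfolding Lap_def by (rule spec_op_const) (simp add: ev3_def zero_prod_def)
    then show ?thesis unfolding e .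
  qed
  define \<phi> where "\<phi> = addg c u0"
  have eq: "Lap K (muG K s h \<phi>) i j k = 3 / (2 * dt) * u0 i j k" for i j k
  proof -
    have "Lap K T i j k = 3 / (2 * dt) * Lap K (Pop K u0) i j k + 1 * Lap K (muG K s h \<phi>) i j k"
      unfolding T_def Tf_def Lap_def \<phi>_def using spec_op_lin[of K _ "3 / (2 * dt)" "Pop K u0" 1 "muG K s h (addg c u0)" i j k]
      by simp
    moreover have "Lap K (Pop K u0) i j k = - u0 i j k"
      using Lap_Pop[of u0 K i j k] u0X unfolding Xs_def by simp
    ultimately show ?thesis using LT[of i j k] by simp
  qed
  have "eqG K dt s h c \<phi>"
    unfolding eqG_def
  proof (intro ext)
    fix i j k
    show "3 / 2 * (\<phi> i j k - c i j k) / dt = Lap K (muG K s h \<phi>) i j k"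
      using eq[of i j k] unfolding \<phi>_def addg_def by simp
  qed
  moreover have "\<phi> \<in> grid_space K"
    using cp u0X unfolding \<phi>_def addg_def Xs_def grid_space_def by simp
  ultimately show ?thesis by blast
qed

lemma spec_op_real_add: "spec_op K (\<lambda>l m n. complex_of_real (x l m n + y l m n)) f i j k
   = spec_op K (\<lambda>l m n. complex_of_real (x l m n)) f i j k + spec_op K (\<lambda>l m n. complex_of_real (y l m n)) f i j k"
proof -
  have "(\<lambda>l m n. complex_of_real (x l m n + y l m n)) = (\<lambda>l m n. complex_of_real 1 * complex_of_real (x l m n) + complex_of_real 1 * complex_of_real (y l m n))"
    by simp
  then show ?thesis using spec_op_siglin[of K 1 "\<lambda>l m n. complex_of_real (x l m n)" 1 "\<lambda>l m n. complex_of_real (y l m n)" f i j k] by simp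
qed

lemma spec_op_real_scale: "spec_op K (\<lambda>l m n. complex_of_real (a * x l m n)) f i j k
   = a * spec_op K (\<lambda>l m n. complex_of_real (x l m n)) f i j k"
proof -
  have "(\<lambda>l m n. complex_of_real (a * x l m n)) = (\<lambda>l m n. complex_of_real a * complex_of_real (x l m n) + complex_of_real 0 * complex_of_real (x l m n))"
    by simp
  then show ?thesis using spec_op_siglin[of K a "\<lambda>l m n. complex_of_real (x l m n)" 0 "\<lambda>l m n. complex_of_real (x l m n)" f i j k] by simp
qed

lemma LapLap: "Lap K (Lap K f) = spec_op K (\<lambda>l m n. complex_of_real (lapS l m n * lapS l m n)) f"
  unfolding Lap_eq compose[OF herm_lap] by simp

definition mS :: "nat \<Rightarrow> real \<Rightarrow> real \<Rightarrow> real \<Rightarrow> int \<Rightarrow> int \<Rightarrow> int \<Rightarrow> real" where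
  "mS s dt eps A l m n = (if s = 1 then (1 - eps) + ((- (A * dt)) * lapS l m n + lapS l m n * lapS l m n)
                          else 1 + ((2 - A * dt) * lapS l m n + lapS l m n * lapS l m n))"

definition hS :: "nat \<Rightarrow> nat \<Rightarrow> real \<Rightarrow> real \<Rightarrow> real \<Rightarrow> grid \<Rightarrow> grid \<Rightarrow> grid" where
  "hS s K dt eps A \<phi>k \<phi>km1 = (if s = 1
     then (\<lambda>i j k. 2 * Lap K (\<lambda>i j k. 2 * \<phi>k i j k - \<phi>km1 i j k) i j k + A * dt * Lap K \<phi>k i j k)
     else (\<lambda>i j k. - eps * (2 * \<phi>k i j k - \<phi>km1 i j k) + A * dt * Lap K \<phi>k i j k))"

lemma spec_mS:
  assumes "\<phi> \<in> grid_space K"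
  shows "spec_op K (\<lambda>l m n. complex_of_real (mS s dt eps A l m n)) \<phi> i j k =
    (if s = 1 then (1 - eps) * \<phi> i j k - A * dt * Lap K \<phi> i j k + Lap K (Lap K \<phi>) i j k
     else \<phi> i j k + (2 - A * dt) * Lap K \<phi> i j k + Lap K (Lap K \<phi>) i j k)"
proof (cases "s = 1")
  case True
  have e: "(\<lambda>l m n. complex_of_real (mS s dt eps A l m n)) = (\<lambda>l m n. complex_of_real ((1 - eps) + ((- (A * dt)) * lapS l m n + lapS l m n * lapS l m n)))"
    by (simp only: mS_def True if_True simp_thms)
  show ?thesis unfolding e spec_op_real_add spec_op_real_scale spec_op_id[OF assms] LapLap[symmetric] Lap_eq[symmetric]
    using True by simp
next
  case False
  have e: "(\<lambda>l m n. complex_of_real (mS s dt eps A l m n)) = (\<lambda>l m n. complex_of_real (1 + ((2 - A * dt) * lapS l m n + lapS l m n * lapS l m n)))"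
    by (simp only: mS_def False if_False)
  show ?thesis unfolding e spec_op_real_add spec_op_real_scale spec_op_id[OF assms] LapLap[symmetric] Lap_eq[symmetric]
    using False by simp
qed

lemma mu_scheme_eq:
  assumes "\<phi> \<in> grid_space K"
  shows "mu_scheme s K dt eps A \<phi> \<phi>k \<phi>km1 = muG K (mS s dt eps A) (hS s K dt eps A \<phi>k \<phi>km1) \<phi>"
proof (intro ext)
  fix i j k
  have d: "Lap K (\<lambda>i j k. \<phi> i j k - \<phi>k i j k) i j k = Lap K \<phi> i j k - Lap K \<phi>k i j k"
    unfolding Lap_def by (rule spec_op_diff)
  show "mu_scheme s K dt eps A \<phi> \<phi>k \<phi>km1 i j k = muG K (mS s dt eps A) (hS s K dt eps A \<phi>k \<phi>km1) \<phi> i j k"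
    unfolding mu_scheme_def muG_def spec_mS[OF assms] hS_def
    by (cases "s = 1") (simp_all add: mu1_def mu2_def d algebra_simps)
qed

lemma mS_nonneg:
  assumes "dt > 0" "eps < 1" "A \<ge> 0"
  shows "mS s dt eps A l m n \<ge> 0"
proof -
  have L: "lapS l m n \<le> 0" by (rule lapS_nonpos)
  have Ad: "A * dt \<ge> 0" using assms by simp
  have a: "- (A * dt) * lapS l m n \<ge> 0" by (rule mult_nonpos_nonpos) (use L Ad in auto)
  have b: "lapS l m n * lapS l m n \<ge> 0" by simp
  have c: "1 + ((2 - A * dt) * lapS l m n + lapS l m n * lapS l m n) = (1 + lapS l m n)\<^sup>2 + (- (A * dt)) * lapS l m n"
    by (simp add: algebra_simps power2_eq_square)
  show ?thesis
  proof (cases "s = 1")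
    case True
    then have "mS s dt eps A l m n = (1 - eps) + ((- (A * dt)) * lapS l m n + lapS l m n * lapS l m n)"
      by (simp only: mS_def True if_True simp_thms)
    then show ?thesis using a b assms(2) by linarith
  next
    case False
    then have "mS s dt eps A l m n = (1 + lapS l m n)\<^sup>2 + (- (A * dt)) * lapS l m n"
      unfolding c[symmetric] by (simp only: mS_def if_False)
    then show ?thesis using a zero_le_power2[of "1 + lapS l m n"] by linarith
  qed
qed

lemma hS_periodic:
  assumes "\<phi>k \<in> grid_space K" "\<phi>km1 \<in> grid_space K"
  shows "hS s K dt eps A \<phi>k \<phi>km1 \<in> grid_space K"
  using assms unfolding hS_def Lap_def grid_space_def by simp

definition cS :: "grid \<Rightarrow> grid \<Rightarrow> grid" where
  "cS \<phi>k \<phi>km1 = (\<lambda>i j k. (4 * \<phi>k i j k - \<phi>km1 i j k) / 3)"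

lemma cS_periodic: "\<phi>k \<in> grid_space K \<Longrightarrow> \<phi>km1 \<in> grid_space K \<Longrightarrow> cS \<phi>k \<phi>km1 \<in> grid_space K"
  unfolding cS_def grid_space_def by simp

lemma scheme_eqG:
  assumes "\<phi> \<in> grid_space K"
  shows "scheme s K dt eps A \<phi> \<phi>k \<phi>km1 \<longleftrightarrow> eqG K dt (mS s dt eps A) (hS s K dt eps A \<phi>k \<phi>km1) (cS \<phi>k \<phi>km1) \<phi>"
proof -
  have p: "3 / 2 * (\<phi> i j k - cS \<phi>k \<phi>km1 i j k) = 3 / 2 * \<phi> i j k - 2 * \<phi>k i j k + 1 / 2 * \<phi>km1 i j k" for i j k
    unfolding cS_def by (simp add: field_simps)
  have "(\<lambda>i j k. (3 / 2 * \<phi> i j k - 2 * \<phi>k i j k + 1 / 2 * \<phi>km1 i j k) / dt)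
      = (\<lambda>i j k. 3 / 2 * (\<phi> i j k - cS \<phi>k \<phi>km1 i j k) / dt)"
    unfolding p ..
  then show ?thesis unfolding scheme_def eqG_def mu_scheme_eq[OF assms] by simp
qed

lemma gmean_comb: "gmean K (\<lambda>i j k. (a * f i j k - b * g i j k + c * h i j k) / d)
   = (a * gmean K f - b * gmean K g + c * gmean K h) / d"
  unfolding gmean_def ginner_alt
  by (simp add: ev3_def sum.distrib sum_subtractf sum_divide_distrib[symmetric] sum_distrib_left[symmetric] algebra_simps)

lemma gmean_Lap: "gmean K (Lap K f) = 0"
  unfolding Lap_eq by (rule gmean_spec[OF herm_lap]) (simp add: ev3_def lapS_def zero_prod_def)

lemma mean_step:
  assumes "scheme s K dt eps A \<phi> \<phi>k \<phi>km1" "dt > 0"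
  shows "3 / 2 * gmean K \<phi> - 2 * gmean K \<phi>k + 1 / 2 * gmean K \<phi>km1 = 0"
proof -
  have "gmean K (\<lambda>i j k. (3 / 2 * \<phi> i j k - 2 * \<phi>k i j k + 1 / 2 * \<phi>km1 i j k) / dt)
      = gmean K (Lap K (mu_scheme s K dt eps A \<phi> \<phi>k \<phi>km1))"
    using assms(1) unfolding scheme_def by simp
  then have "(3 / 2 * gmean K \<phi> - 2 * gmean K \<phi>k + 1 / 2 * gmean K \<phi>km1) / dt = 0"
    unfolding gmean_comb gmean_Lap .
  then show ?thesis using assms(2) by simp
qed

theorem theorem3p1:
  fixes K :: nat and dt eps A :: real and \<phi>k \<phi>km1 :: grid
  assumes "dt > 0" and "0 < eps" and "eps < 1" and "A \<ge> 0"
    and "\<phi>k \<in> grid_space K" and "\<phi>km1 \<in> grid_space K"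
    and "gmean K \<phi>k = gmean K \<phi>km1"
  shows "(\<forall>s\<in>{1, 2}. \<exists>!\<phi>. \<phi> \<in> grid_space K \<and> scheme s K dt eps A \<phi> \<phi>k \<phi>km1)
       \<and> (\<forall>s\<in>{1, 2}. \<forall>(\<Phi> :: int \<Rightarrow> grid) \<beta>0.
            (\<forall>k \<ge> -1. \<Phi> k \<in> grid_space K) \<and>
            (\<forall>k \<ge> 0. scheme s K dt eps A (\<Phi> (k + 1)) (\<Phi> k) (\<Phi> (k - 1))) \<and>
            gmean K (\<Phi> 0) = \<beta>0 \<and> gmean K (\<Phi> (-1)) = \<beta>0
            \<longrightarrow> (\<forall>k \<ge> 0. gmean K (\<Phi> k) = \<beta>0))"
proof (intro conjI ballI allI impI)
  fix s :: nat
  have nn: "\<And>q. q \<in> M3 K \<Longrightarrow> ev3 (mS s dt eps A) q \<ge> 0"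
    using mS_nonneg[OF assms(1) assms(3) assms(4)] by (simp add: ev3_def)
  obtain \<phi> where \<phi>: "\<phi> \<in> grid_space K" "eqG K dt (mS s dt eps A) (hS s K dt eps A \<phi>k \<phi>km1) (cS \<phi>k \<phi>km1) \<phi>"
    using existG[OF assms(1) nn hS_periodic[OF assms(5,6)] cS_periodic[OF assms(5,6)]] by blast
  show "\<exists>!\<phi>. \<phi> \<in> grid_space K \<and> scheme s K dt eps A \<phi> \<phi>k \<phi>km1"
  proof (rule ex1I[of _ \<phi>])
    show "\<phi> \<in> grid_space K \<and> scheme s K dt eps A \<phi> \<phi>k \<phi>km1"
      using \<phi> scheme_eqG[OF \<phi>(1)] by simp
  next
    fix \<psi> assume "\<psi> \<in> grid_space K \<and> scheme s K dt eps A \<psi> \<phi>k \<phi>km1"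
    then have "eqG K dt (mS s dt eps A) (hS s K dt eps A \<phi>k \<phi>km1) (cS \<phi>k \<phi>km1) \<psi>"
      using scheme_eqG by blast
    then show "\<psi> = \<phi>" using uniqG[OF assms(1) nn _ \<phi>(2)] by blast
  qed
next
  fix s :: nat and \<Phi> :: "int \<Rightarrow> grid" and \<beta>0 :: real and k :: int
  assume H: "(\<forall>k \<ge> -1. \<Phi> k \<in> grid_space K) \<and>
            (\<forall>k \<ge> 0. scheme s K dt eps A (\<Phi> (k + 1)) (\<Phi> k) (\<Phi> (k - 1))) \<and>
            gmean K (\<Phi> 0) = \<beta>0 \<and> gmean K (\<Phi> (-1)) = \<beta>0"
  assume k0: "k \<ge> 0"
  have "gmean K (\<Phi> k) = \<beta>0 \<and> gmean K (\<Phi> (k - 1)) = \<beta>0"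
    using k0
  proof (induction k rule: int_ge_induct)
    case base then show ?case using H by simp
  next
    case (step i)
    have "3 / 2 * gmean K (\<Phi> (i + 1)) - 2 * gmean K (\<Phi> i) + 1 / 2 * gmean K (\<Phi> (i - 1)) = 0"
      using mean_step[of s K dt eps A "\<Phi> (i + 1)" "\<Phi> i" "\<Phi> (i - 1)"] H step.hyps assms(1) by blast
    then show ?case using step.IH by simp
  qed
  then show "gmean K (\<Phi> k) = \<beta>0" by simp
qed

end
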